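(* Under Strategy 2A (described in the context), let $U(\omega)$, $U_h(\omega)$, $U_s(\omega)$ be the numbers of uncles created during the attack cycle $\omega$ that are referred (in $\omega$ or a later cycle) by any nephew, by a nephew mined by the honest miners, and by a nephew mined by the attacker, respectively. Then $$\mathbb{E}[U_s]=\mathbb{E}[U]-\mathbb{E}[U_h]=q-q^{n_1+1}-\left(p^2q+\bigl(p+(1-\gamma)p^2q\bigr)pq^2\cdot\frac{1-(pq)^{n_1-1}}{1-pq}\right).$$
   Context: Honest hashrate $p$, attacker hashrate $q$, $p+q=1$, $0<q<p$; $\gamma\in[0,1]$ is the fraction of honest hashrate mining on the attacker's block during a public competition between equal-height blocks. Attack cycles are i.i.d. words in S (attacker block) and H (honest block): H, SHS, SHH, or SSwH with $w$ a Dyck word; $\mathbb{P}[H]=p$, $\mathbb{P}[SHS]=pq^2$, $\mathbb{P}[SHH]=p^2q$, $\mathbb{P}[SSwH]=q^2p(pq)^{|w|}$ ($|w|$ half the length of $w$). In SHH the second honest block is built on the attacker's block with probability $\gamma$ and on the first honest block with probability $1-\gamma$. Ethereum rules: an uncle is a non-official block whose parent is official; a nephew (official block) may refer an uncle at distance (height difference) at most $n_1$ ($n_1\ge2$ an integer); each referred uncle is referred by exactly one nephew. Strategy 2A ("brutal fork"): the attacker keeps his whole fork secret and releases it all at once at the end of the attack cycle, when an honest block would reduce his advance to one block (after a single attacker block, he publishes it to compete with the honest block); the attacker's fork wins in cycles starting with SS; all miners refer all possible uncles. *)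

theory Defs
  imports "HOL-Probability.Probability"
begin

text \<open>Letters of attack-cycle words: True = S (attacker block), False = H (honest block).
  A cycle outcome is a word together with a bit g that matters only for the word SHH:
  g = True iff the second honest block is built on the attacker's block (probability gamma).\<close>

type_synonym cycle = "bool list \<times> bool"

definition dyck :: "bool list \<Rightarrow> bool" where
  "dyck v \<longleftrightarrow> length (filter id v) = length (filter Not v) \<and>
     (\<forall>k\<le>length v. length (filter Not (take k v)) \<le> length (filter id (take k v)))"

definition cycle_prob :: "real \<Rightarrow> real \<Rightarrow> real \<Rightarrow> cycle \<Rightarrow> real" where
  "cycle_prob p q \<gamma> c = (case c of (w, g) \<Rightarrow>
     if w = [False] then (if g then 0 else p)
     else if w = [True, False, True] then (if g then 0 else p * q^2)
     else if w = [True, False, False] then (if g then \<gamma> else 1 - \<gamma>) * p^2 * q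
     else if (\<exists>v. w = True # True # v @ [False] \<and> dyck v)
       then (if g then 0 else q^2 * p * (p * q) ^ ((length w - 3) div 2))
     else 0)"

definition cycle_pmf :: "real \<Rightarrow> real \<Rightarrow> real \<Rightarrow> cycle pmf" where
  "cycle_pmf p q \<gamma> = embed_pmf (cycle_prob p q \<gamma>)"

text \<open>A block of a cycle: miner (True = attacker), parent (index in the same cycle, None = the
  official tip at the start of the cycle), whether it is official, publication time (local,
  = index of the block being mined at that moment), height relative to the cycle's start.\<close>
datatype blk = Blk (att: bool) (par: "nat option") (off: bool) (pub: nat) (hgt: nat)

definition prev_same :: "bool list \<Rightarrow> nat \<Rightarrow> nat option" where
  "prev_same w i = (if \<exists>j<i. w ! j = w ! i then Some (GREATEST j. j < i \<and> w ! j = w ! i) else None)"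

definition height_gen :: "bool list \<Rightarrow> nat \<Rightarrow> nat" where
  "height_gen w i = 1 + length (filter (\<lambda>b. b = w ! i) (take i w))"

text \<open>Block structure produced by Strategy 2A in a cycle (blocks in mining order).\<close>
definition blocks :: "cycle \<Rightarrow> blk list" where
  "blocks c = (case c of (w, g) \<Rightarrow>
     if w = [True, False, True] then
       [Blk True None True 1 1, Blk False None False 1 1, Blk True (Some 0) True 2 2]
     else if w = [True, False, False] then
       [Blk True None g 1 1, Blk False None (\<not> g) 1 1,
        Blk False (Some (if g then 0 else 1)) True 2 2]
     else map (\<lambda>i. Blk (w ! i) (prev_same w i) (if w ! i then True else w = [False])
                      (if w ! i then length w - 1 else i) (height_gen w i)) [0..<length w])"

definition offlen :: "cycle \<Rightarrow> nat" where
  "offlen c = length (filter off (blocks c))"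

text \<open>Global time offset and height offset of the k-th cycle of the sequence.\<close>
definition toff :: "cycle stream \<Rightarrow> nat \<Rightarrow> nat" where
  "toff xs k = (\<Sum>i<k. length (fst (xs !! i)))"

definition hoff :: "cycle stream \<Rightarrow> nat \<Rightarrow> nat" where
  "hoff xs k = (\<Sum>i<k. offlen (xs !! i))"

definition is_uncle :: "cycle \<Rightarrow> nat \<Rightarrow> bool" where
  "is_uncle c i \<longleftrightarrow> i < length (blocks c) \<and> \<not> off (blocks c ! i) \<and>
     (case par (blocks c ! i) of None \<Rightarrow> True | Some j \<Rightarrow> off (blocks c ! j))"

text \<open>Block j of cycle k (official) is able to refer block i of cycle 0 (an uncle):
  height distance between 1 and n1 and the uncle is known to the nephew's miner when
  the nephew is mined.\<close>
definition can_refer :: "nat \<Rightarrow> cycle stream \<Rightarrow> nat \<Rightarrow> nat \<Rightarrow> nat \<Rightarrow> bool" where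
  "can_refer n1 xs i k j \<longleftrightarrow>
     (let ub = blocks (xs !! 0) ! i; nb = blocks (xs !! k) ! j in
      j < length (blocks (xs !! k)) \<and> off nb \<and>
      hgt ub < hoff xs k + hgt nb \<and> hoff xs k + hgt nb \<le> hgt ub + n1 \<and>
      (pub ub < toff xs k + j \<or> (att nb \<and> att ub \<and> i < toff xs k + j)))"

definition ref_heights :: "nat \<Rightarrow> cycle stream \<Rightarrow> nat \<Rightarrow> nat set" where
  "ref_heights n1 xs i = {h. \<exists>k j. can_refer n1 xs i k j \<and> h = hoff xs k + hgt (blocks (xs !! k) ! j)}"

definition referred :: "nat \<Rightarrow> cycle stream \<Rightarrow> nat \<Rightarrow> bool" where
  "referred n1 xs i \<longleftrightarrow> ref_heights n1 xs i \<noteq> {}"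

text \<open>The referring nephew is the first official block (lowest height) able to refer it.\<close>
definition referred_by :: "bool \<Rightarrow> nat \<Rightarrow> cycle stream \<Rightarrow> nat \<Rightarrow> bool" where
  "referred_by a n1 xs i \<longleftrightarrow> referred n1 xs i \<and>
     (\<exists>k j. can_refer n1 xs i k j \<and>
        hoff xs k + hgt (blocks (xs !! k) ! j) = (LEAST h. h \<in> ref_heights n1 xs i) \<and>
        att (blocks (xs !! k) ! j) = a)"

definition U :: "nat \<Rightarrow> cycle stream \<Rightarrow> real" where
  "U n1 xs = real (card {i. is_uncle (xs !! 0) i \<and> referred n1 xs i})"

definition U_h :: "nat \<Rightarrow> cycle stream \<Rightarrow> real" where
  "U_h n1 xs = real (card {i. is_uncle (xs !! 0) i \<and> referred_by False n1 xs i})"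

definition U_s :: "nat \<Rightarrow> cycle stream \<Rightarrow> real" where
  "U_s n1 xs = real (card {i. is_uncle (xs !! 0) i \<and> referred_by True n1 xs i})"

end

theory Submission
  imports Defs
begin


definition CR :: "nat \<Rightarrow> nat \<Rightarrow> nat \<Rightarrow> nat \<Rightarrow> cycle list \<Rightarrow> bool" where
  "CR n1 i k j l \<longleftrightarrow>
     (let ub = blocks (l ! 0) ! i; nb = blocks (l ! k) ! j;
          ho = (\<Sum>t<k. offlen (l ! t)); tof = (\<Sum>t<k. length (fst (l ! t))) in
      j < length (blocks (l ! k)) \<and> off nb \<and>
      hgt ub < ho + hgt nb \<and> ho + hgt nb \<le> hgt ub + n1 \<and>
      (pub ub < tof + j \<or> (att nb \<and> att ub \<and> i < tof + j)))"

lemma sum_stake: "(\<Sum>t<k. f (stake (Suc k) xs ! t)) = (\<Sum>t<k. f (xs !! t))"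
  by (rule sum.cong) (auto simp: stake_nth simp del: stake.simps)

lemma can_refer_CR: "can_refer n1 xs i k j = CR n1 i k j (stake (Suc k) xs)"
  unfolding can_refer_def CR_def hoff_def toff_def Let_def
  by (simp del: stake.simps add: stake_nth sum_stake)

lemma meas_CR[measurable]: "Measurable.pred (stream_space (count_space UNIV)) (\<lambda>xs. can_refer n1 xs i k j)"
  unfolding can_refer_CR
  by (rule measurable_compose[OF measurable_stake]) simp

definition HG :: "nat \<Rightarrow> nat \<Rightarrow> cycle list \<Rightarrow> nat" where
  "HG k j l = (\<Sum>t<k. offlen (l ! t)) + hgt (blocks (l ! k) ! j)"

lemma HG_eq: "hoff xs k + hgt (blocks (xs !! k) ! j) = HG k j (stake (Suc k) xs)"
  unfolding HG_def hoff_def by (simp del: stake.simps add: stake_nth sum_stake)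

lemma meas_HG[measurable]: "(\<lambda>xs. hoff xs k + hgt (blocks (xs !! k) ! j)) \<in> measurable (stream_space (count_space UNIV)) (count_space UNIV)"
  unfolding HG_eq
  by (rule measurable_compose[OF measurable_stake]) simp

lemma meas_att[measurable]: "Measurable.pred (stream_space (count_space UNIV)) (\<lambda>xs. att (blocks (xs !! k) ! j))"
  by (rule measurable_compose[OF measurable_snth]) simp

lemma referred_iff: "referred n1 xs i \<longleftrightarrow> (\<exists>k j. can_refer n1 xs i k j)"
  unfolding referred_def ref_heights_def by auto

lemma meas_ref[measurable]: "Measurable.pred (stream_space (count_space UNIV)) (\<lambda>xs. referred n1 xs i)"
  unfolding referred_iff by measurable

lemma meas_least[measurable]: "(\<lambda>xs. LEAST h. h \<in> ref_heights n1 xs i) \<in> measurable (stream_space (count_space UNIV)) (count_space UNIV)"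
  unfolding ref_heights_def mem_Collect_eq by measurable

lemma meas_eqfun[measurable (raw)]:
  fixes f g :: "'a \<Rightarrow> nat"
  assumes [measurable]: "f \<in> measurable M (count_space UNIV)" "g \<in> measurable M (count_space UNIV)"
  shows "Measurable.pred M (\<lambda>x. f x = g x)"
proof -
  have "(\<lambda>x. f x = g x) = (\<lambda>x. \<exists>h. f x = h \<and> g x = h)" by auto
  moreover have "Measurable.pred M (\<lambda>x. \<exists>h. f x = h \<and> g x = h)" by measurable
  ultimately show ?thesis by simp
qed

lemma meas_refby[measurable]: "Measurable.pred (stream_space (count_space UNIV)) (\<lambda>xs. referred_by a n1 xs i)"
  unfolding referred_by_def by (cases a) (simp_all, measurable)

lemma card_sum: "card {i. is_uncle c i \<and> P i} = (\<Sum>i<length (blocks c). if is_uncle c i \<and> P i then 1 else 0)"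
proof -
  have "{i. is_uncle c i \<and> P i} = {i\<in>{..<length (blocks c)}. is_uncle c i \<and> P i}"
    by (auto simp: is_uncle_def)
  then show ?thesis by (simp add: sum.If_cases) (intro arg_cong[where f=card], auto)
qed

lemma meas_gen:
  assumes [measurable]: "\<And>i. Measurable.pred (stream_space (count_space UNIV)) (P i)"
  shows "(\<lambda>xs. real (card {i. is_uncle (xs !! 0) i \<and> P i xs})) \<in> borel_measurable (stream_space (count_space UNIV))"
proof -
  have "(\<lambda>xs. (\<lambda>c xs. real (card {i. is_uncle c i \<and> P i xs})) (xs !! 0) xs) \<in> borel_measurable (stream_space (count_space UNIV))"
  proof (rule measurable_compose_countable[where f="\<lambda>c xs. real (card {i. is_uncle c i \<and> P i xs})" and g="\<lambda>xs. xs !! 0"])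
    fix c :: cycle
    show "(\<lambda>xs. real (card {i. is_uncle c i \<and> P i xs})) \<in> borel_measurable (stream_space (count_space UNIV))"
      unfolding card_sum by measurable
  qed measurable
  then show ?thesis by simp
qed

lemma meas_U: "U n1 \<in> borel_measurable (stream_space (measure_pmf M))"
  "U_h n1 \<in> borel_measurable (stream_space (measure_pmf M))"
  "U_s n1 \<in> borel_measurable (stream_space (measure_pmf M))"
proof -
  have e: "borel_measurable (stream_space (measure_pmf M)) = borel_measurable (stream_space (count_space UNIV))"
    by (intro measurable_cong_sets sets_stream_space_cong) simp_all
  show "U n1 \<in> borel_measurable (stream_space (measure_pmf M))"
    unfolding e U_def by (rule meas_gen) measurable
  show "U_h n1 \<in> borel_measurable (stream_space (measure_pmf M))"
    unfolding e U_h_def by (rule meas_gen) measurable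
  show "U_s n1 \<in> borel_measurable (stream_space (measure_pmf M))"
    unfolding e U_s_def by (rule meas_gen) measurable
qed


definition ht :: "bool list \<Rightarrow> int" where
  "ht v = int (length (filter id v)) - int (length (filter Not v))"

lemma ht_Nil[simp]: "ht [] = 0" and ht_Cons[simp]: "ht (x # v) = (if x then 1 else -1) + ht v"
  and ht_append[simp]: "ht (a @ b) = ht a + ht b"
  by (auto simp: ht_def)

lemma dyck_iff: "dyck v \<longleftrightarrow> ht v = 0 \<and> (\<forall>k. 0 \<le> ht (take k v))"
proof -
  have "(\<forall>k\<le>length v. 0 \<le> ht (take k v)) \<longleftrightarrow> (\<forall>k. 0 \<le> ht (take k v))"
    by (metis nle_le take_all)
  then show ?thesis unfolding dyck_def ht_def by auto
qed

lemma dyck_Nil[simp]: "dyck []" by (simp add: dyck_iff)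

lemma dyck_comp:
  assumes "dyck a" "dyck b" shows "dyck (True # a @ False # b)"
proof -
  have a: "ht a = 0" "\<And>k. 0 \<le> ht (take k a)" and b: "ht b = 0" "\<And>k. 0 \<le> ht (take k b)"
    using assms by (auto simp: dyck_iff)
  have "0 \<le> ht (take k (True # a @ False # b))" for k
  proof (cases k)
    case (Suc k')
    show ?thesis
    proof (cases "k' \<le> length a")
      case True
      then show ?thesis using Suc a(2)[of k'] by simp
    next
      case False
      then obtain r where "k' - length a = Suc r" by (cases "k' - length a") auto
      then show ?thesis using Suc False a b(2)[of r] by simp
    qed
  qed simp
  then show ?thesis using a b by (simp add: dyck_iff)
qed

lemma dyck_decomp:
  assumes "dyck v" "v \<noteq> []"
  shows "\<exists>a b. dyck a \<and> dyck b \<and> v = True # a @ False # b"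
proof -
  have v0: "ht v = 0" and vp: "\<And>k. 0 \<le> ht (take k v)" using assms(1) by (auto simp: dyck_iff)
  obtain x v' where vx: "v = x # v'" using assms(2) by (cases v) auto
  have x: "x = True" using vp[of 1] vx by (cases x) auto
  define P where "P k \<longleftrightarrow> 0 < k \<and> ht (take k v) = 0" for k
  have Pl: "P (length v)" using v0 vx by (simp add: P_def)
  define m where "m = (LEAST k. P k)"
  have Pm: "P m" unfolding m_def by (rule LeastI[of P, OF Pl])
  have mle: "m \<le> length v" unfolding m_def by (rule Least_le[of P, OF Pl])
  have pos: "1 \<le> ht (take k v)" if "0 < k" "k < m" for k
  proof -
    have "\<not> P k" using that(2) unfolding m_def using not_less_Least by blast
    then show ?thesis using that(1) vp[of k] by (simp add: P_def)
  qed
  have m2: "2 \<le> m"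
  proof (rule ccontr)
    assume "\<not> 2 \<le> m"
    then have "m = 1" using Pm by (simp add: P_def)
    then show False using Pm vx x by (simp add: P_def)
  qed
  have m1: "ht (take (m - 1) v) \<ge> 1" using pos[of "m - 1"] m2 by simp
  have tk: "take m v = take (m - 1) v @ [v ! (m - 1)]"
    using take_Suc_conv_app_nth[of "m - 1" v] m2 mle by simp
  have last: "v ! (m - 1) = False" and hm1: "ht (take (m - 1) v) = 1"
    using Pm m1 unfolding P_def tk by (auto split: if_splits)
  define a where "a = take (m - 2) v'"
  define b where "b = drop m v"
  have ta: "take (m - 1) v = True # a"
  proof -
    obtain m' where "m - 1 = Suc m'" using m2 by (cases "m - 1") auto
    moreover have "m - 2 = m'" using calculation by simp
    ultimately show ?thesis using vx x unfolding a_def by simp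
  qed
  have vdec: "v = True # a @ False # b"
  proof -
    have "v = take m v @ drop m v" by simp
    also have "\<dots> = True # a @ False # b" unfolding tk ta last b_def by simp
    finally show ?thesis .
  qed
  have da: "dyck a"
  proof -
    have "ht a = 0" using hm1 ta by simp
    moreover have "0 \<le> ht (take j a)" for j
    proof (cases "j < length a")
      case True
      have "length (take (m - 1) v) = m - 1" using mle by simp
      then have "length a = m - 2" using ta by (metis diff_Suc_1 diff_diff_left length_Cons one_add_one plus_1_eq_Suc)
      then have "take (Suc j) v = True # take j a" using True vdec by simp
      moreover have "1 \<le> ht (take (Suc j) v)" using pos[of "Suc j"] True \<open>length a = m - 2\<close> m2 by simp
      ultimately show ?thesis by simp
    next
      case False
      then show ?thesis using \<open>ht a = 0\<close> by simp
    qed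
    ultimately show ?thesis by (simp add: dyck_iff)
  qed
  have db: "dyck b"
  proof -
    have htm: "ht (take m v) = 0" using Pm by (simp add: P_def)
    have "ht b = 0" using v0 htm by (metis append_take_drop_id add.left_neutral ht_append b_def)
    moreover have "0 \<le> ht (take j b)" for j
    proof -
      have "take (m + j) v = take m v @ take j b" unfolding b_def using mle by (simp add: take_add)
      then show ?thesis using vp[of "m + j"] htm by simp
    qed
    ultimately show ?thesis by (simp add: dyck_iff)
  qed
  show ?thesis using da db vdec by blast
qed

lemma dyck_inj_aux:
  assumes "dyck a" "dyck a'" "a @ False # b = a' @ False # b'" "length a < length a'"
  shows False
proof -
  have "a @ [False] = take (Suc (length a)) (a @ False # b)" by simp
  also have "\<dots> = take (Suc (length a)) (a' @ False # b')" using assms(3) by simp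
  also have "\<dots> = take (Suc (length a)) a'" using assms(4) by simp
  finally have eq: "a @ [False] = take (Suc (length a)) a'" .
  have "ht (a @ [False]) = -1" using assms(1) by (simp add: dyck_iff)
  then have "ht (take (Suc (length a)) a') = -1" by (simp only: eq)
  moreover have "0 \<le> ht (take (Suc (length a)) a')" using assms(2) by (simp add: dyck_iff)
  ultimately show False by simp
qed

lemma dyck_inj:
  assumes "dyck a" "dyck a'" "True # a @ False # b = True # a' @ False # b'"
  shows "a = a' \<and> b = b'"
proof -
  have e: "a @ False # b = a' @ False # b'" using assms(3) by simp
  have "\<not> length a < length a'" using dyck_inj_aux[OF assms(1,2) e] by blast
  moreover have "\<not> length a' < length a" using dyck_inj_aux[OF assms(2,1) e[symmetric]] by blast
  ultimately have "length a = length a'" by simp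
  then show ?thesis using e by simp
qed


definition dw :: "real \<Rightarrow> bool list \<Rightarrow> ennreal" where
  "dw x v = (if dyck v then ennreal (x ^ (length v div 2)) else 0)"

lemma dyck_len: "dyck v \<Longrightarrow> length v = 2 * length (filter id v)"
proof -
  assume "dyck v"
  then have "ht v = 0" by (simp add: dyck_iff)
  moreover have "length (filter id v) + length (filter (\<lambda>x. \<not> id x) v) = length v"
    by (rule sum_length_filter_compl)
  ultimately show ?thesis unfolding ht_def by (simp add: comp_def)
qed

lemma len_comp: "dyck a \<Longrightarrow> dyck b \<Longrightarrow> length (True # a @ False # b) div 2 = Suc (length a div 2 + length b div 2)"
  using dyck_len[of a] dyck_len[of b] by simp

lemma dw_comp: "0 \<le> x \<Longrightarrow> dyck a \<Longrightarrow> dyck b \<Longrightarrow> dw x (True # a @ False # b) = ennreal x * (dw x a * dw x b)"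
  unfolding dw_def using dyck_comp[of a b] len_comp[of a b]
  by (simp add: ennreal_mult' power_add)

definition csum :: "('a \<Rightarrow> ennreal) \<Rightarrow> ennreal" where
  "csum f = nn_integral (count_space UNIV) f"

lemma T_lemma:
  assumes x: "0 \<le> x"
  shows "csum (\<lambda>v. dw x v * h v) =
     h [] + ennreal x * csum (\<lambda>a. csum (\<lambda>b. dw x a * dw x b * h (True # a @ False # b)))"
proof -
  define \<phi> where "\<phi> = (\<lambda>(a::bool list, b::bool list). True # a @ False # b)"
  define D2 where "D2 = {(a, b). dyck a \<and> dyck b}"
  have inj: "inj_on \<phi> D2"
  proof (rule inj_onI)
    fix z z' assume "z \<in> D2" "z' \<in> D2" "\<phi> z = \<phi> z'"
    moreover obtain a b where z: "z = (a, b)" by (cases z)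
    moreover obtain a' b' where z': "z' = (a', b')" by (cases z')
    ultimately have "dyck a" "dyck a'" "True # a @ False # b = True # a' @ False # b'"
      unfolding \<phi>_def D2_def by auto
    from dyck_inj[OF this] show "z = z'" using z z' by simp
  qed
  have img: "\<phi> ` D2 = {v. dyck v \<and> v \<noteq> []}"
  proof
    show "\<phi> ` D2 \<subseteq> {v. dyck v \<and> v \<noteq> []}" unfolding \<phi>_def D2_def using dyck_comp by auto
    show "{v. dyck v \<and> v \<noteq> []} \<subseteq> \<phi> ` D2"
    proof
      fix v assume "v \<in> {v. dyck v \<and> v \<noteq> []}"
      then obtain a b where "dyck a" "dyck b" "v = True # a @ False # b" using dyck_decomp by blast
      then show "v \<in> \<phi> ` D2" unfolding \<phi>_def D2_def by (auto intro!: image_eqI[of _ _ "(a, b)"])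
    qed
  qed
  have split: "dw x v * h v = h [] * indicator {[]} v + dw x v * h v * indicator (\<phi> ` D2) v" for v
    unfolding img by (cases "v = []") (auto simp: dw_def indicator_def)
  have e1: "csum (\<lambda>v. dw x v * h v) =
     csum (\<lambda>v. h [] * indicator {[]} v) + csum (\<lambda>v. dw x v * h v * indicator (\<phi> ` D2) v)"
  proof -
    have "csum (\<lambda>v. dw x v * h v) = csum (\<lambda>v. h [] * indicator {[]} v + dw x v * h v * indicator (\<phi> ` D2) v)"
      by (rule arg_cong[where f=csum]) (rule ext, rule split)
    also have "\<dots> = csum (\<lambda>v. h [] * indicator {[]} v) + csum (\<lambda>v. dw x v * h v * indicator (\<phi> ` D2) v)"
      unfolding csum_def by (subst nn_integral_add) auto
    finally show ?thesis .
  qed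
  have e2: "csum (\<lambda>v::bool list. h [] * indicator {[]} v) = h []"
    unfolding csum_def by (simp add: nn_integral_cmult)
  have "csum (\<lambda>v. dw x v * h v * indicator (\<phi> ` D2) v) =
      nn_integral (count_space (\<phi> ` D2)) (\<lambda>v. dw x v * h v)"
    unfolding csum_def by (simp add: nn_integral_count_space_indicator)
  also have "\<dots> = nn_integral (count_space D2) (\<lambda>z. dw x (\<phi> z) * h (\<phi> z))"
    by (rule nn_integral_bij_count_space[symmetric]) (rule inj_on_imp_bij_betw[OF inj])
  also have "\<dots> = csum (\<lambda>z. dw x (\<phi> z) * h (\<phi> z) * indicator D2 z)"
    unfolding csum_def by (simp add: nn_integral_count_space_indicator)
  also have "\<dots> = csum (\<lambda>z. ennreal x * (dw x (fst z) * dw x (snd z) * h (\<phi> z)))"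
    unfolding csum_def
  proof (rule nn_integral_cong)
    fix z :: "bool list \<times> bool list"
    obtain a b where z: "z = (a, b)" by (cases z)
    show "dw x (\<phi> z) * h (\<phi> z) * indicator D2 z = ennreal x * (dw x (fst z) * dw x (snd z) * h (\<phi> z))"
    proof (cases "dyck a \<and> dyck b")
      case True
      then show ?thesis using z dw_comp[OF x, of a b] by (simp add: D2_def \<phi>_def mult.assoc)
    next
      case False
      then show ?thesis using z by (auto simp: D2_def dw_def)
    qed
  qed
  also have "\<dots> = ennreal x * csum (\<lambda>z. dw x (fst z) * dw x (snd z) * h (\<phi> z))"
    unfolding csum_def by (rule nn_integral_cmult) simp
  finally have e3: "csum (\<lambda>v. dw x v * h v * indicator (\<phi> ` D2) v) = ennreal x * csum (\<lambda>z. dw x (fst z) * dw x (snd z) * h (\<phi> z))" .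
  have e4: "csum (\<lambda>z. dw x (fst z) * dw x (snd z) * h (\<phi> z)) =
     csum (\<lambda>a. csum (\<lambda>b. dw x a * dw x b * h (True # a @ False # b)))"
    unfolding csum_def
    using nn_integral_fst_count_space[of "\<lambda>z. dw x (fst z) * dw x (snd z) * h (\<phi> z)"]
    by (simp add: \<phi>_def)
  have "csum (\<lambda>v. dw x v * h v) = h [] + csum (\<lambda>v. dw x v * h v * indicator (\<phi> ` D2) v)"
    by (subst e1, subst e2, rule refl)
  also have "\<dots> = h [] + ennreal x * csum (\<lambda>z. dw x (fst z) * dw x (snd z) * h (\<phi> z))"
    by (subst e3, rule refl)
  also have "\<dots> = h [] + ennreal x * csum (\<lambda>a. csum (\<lambda>b. dw x a * dw x b * h (True # a @ False # b)))"
    by (subst e4, rule refl)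
  finally show ?thesis .
qed


lemma csum_sep: "csum (\<lambda>a. csum (\<lambda>b. f a * g b)) = csum f * csum g"
proof -
  have "csum (\<lambda>b. f a * g b) = f a * csum g" for a
    unfolding csum_def by (rule nn_integral_cmult) simp
  then have "csum (\<lambda>a. csum (\<lambda>b. f a * g b)) = csum (\<lambda>a. f a * csum g)" by simp
  also have "\<dots> = csum f * csum g" unfolding csum_def by (rule nn_integral_multc) simp
  finally show ?thesis .
qed

lemma csum_mono: "(\<And>v. f v \<le> g v) \<Longrightarrow> csum f \<le> csum g"
  unfolding csum_def by (rule nn_integral_mono) simp

definition TN :: "real \<Rightarrow> nat \<Rightarrow> ennreal" where
  "TN x N = csum (\<lambda>v. dw x v * indicator {v. length v \<le> 2 * N} v)"

lemma TN_0: "0 \<le> x \<Longrightarrow> TN x 0 = 1"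
  unfolding TN_def by (subst T_lemma) (auto simp: indicator_def csum_def)

lemma TN_Suc: assumes x: "0 \<le> x" shows "TN x (Suc N) \<le> 1 + ennreal x * (TN x N * TN x N)"
proof -
  have "TN x (Suc N) = 1 + ennreal x * csum (\<lambda>a. csum (\<lambda>b. dw x a * dw x b * indicator {v. length v \<le> 2 * Suc N} (True # a @ False # b)))"
    unfolding TN_def by (subst T_lemma[OF x]) (simp add: indicator_def)
  also have "\<dots> \<le> 1 + ennreal x * csum (\<lambda>a. csum (\<lambda>b. (dw x a * indicator {v. length v \<le> 2 * N} a) * (dw x b * indicator {v. length v \<le> 2 * N} b)))"
  proof -
    have pw: "dw x a * dw x b * indicator {v. length v \<le> 2 * Suc N} (True # a @ False # b) \<le>
       (dw x a * indicator {v. length v \<le> 2 * N} a) * (dw x b * indicator {v. length v \<le> 2 * N} b)" for a b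
      by (auto simp: indicator_def)
    show ?thesis by (intro add_mono mult_left_mono csum_mono order_refl pw) auto
  qed
  also have "\<dots> = 1 + ennreal x * (TN x N * TN x N)"
    unfolding csum_sep TN_def ..
  finally show ?thesis .
qed

context
  fixes p q :: real
  assumes pq: "0 < q" "q < p" "p + q = 1"
begin

lemma TN_bound: "TN (p * q) N \<le> ennreal (1 / p)"
proof (induction N)
  case 0
  have "1 \<le> 1 / p" using pq by simp
  then show ?case using pq by (simp add: TN_0)
next
  case (Suc N)
  have x: "0 \<le> p * q" using pq by simp
  have "TN (p * q) (Suc N) \<le> 1 + ennreal (p * q) * (TN (p * q) N * TN (p * q) N)"
    by (rule TN_Suc[OF x])
  also have "\<dots> \<le> 1 + ennreal (p * q) * (ennreal (1 / p) * ennreal (1 / p))"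
    by (intro add_mono mult_mono Suc.IH order_refl) auto
  also have "\<dots> = ennreal (1 + p * q * (1 / p * (1 / p)))"
  proof -
    have a: "ennreal (1/p) * ennreal (1/p) = ennreal (1/p * (1/p))"
      by (rule ennreal_mult[symmetric]) (use pq in auto)
    have b: "ennreal (p*q) * ennreal (1/p*(1/p)) = ennreal (p*q*(1/p*(1/p)))"
      by (rule ennreal_mult[symmetric]) (use pq in auto)
    have c: "1 + ennreal (p*q*(1/p*(1/p))) = ennreal (1 + p*q*(1/p*(1/p)))"
      using pq by (simp add: ennreal_plus)
    show ?thesis by (simp only: a b c)
  qed
  also have "1 + p * q * (1 / p * (1 / p)) = 1 / p"
    using pq by (simp add: field_simps)
  finally show ?case .
qed

lemma T_bound: "csum (dw (p * q)) \<le> ennreal (1 / p)"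
proof -
  have sup: "(SUP N. dw (p * q) v * indicator {v. length v \<le> 2 * N} v) = dw (p * q) v" for v
  proof (rule antisym)
    show "(SUP N. dw (p * q) v * indicator {v. length v \<le> 2 * N} v) \<le> dw (p * q) v"
      by (rule SUP_least) (auto simp: indicator_def)
    show "dw (p * q) v \<le> (SUP N. dw (p * q) v * indicator {v. length v \<le> 2 * N} v)"
      by (rule SUP_upper2[of "length v"]) (auto simp: indicator_def)
  qed
  have "csum (dw (p * q)) = csum (\<lambda>v. SUP N. dw (p * q) v * indicator {v. length v \<le> 2 * N} v)"
    unfolding sup by simp
  also have "\<dots> = (SUP N. TN (p * q) N)"
    unfolding csum_def TN_def
    by (rule nn_integral_monotone_convergence_SUP) (auto simp: incseq_def le_fun_def indicator_def intro!: mult_left_mono)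
  also have "\<dots> \<le> ennreal (1 / p)"
    by (rule SUP_least) (rule TN_bound)
  finally show ?thesis .
qed

lemma T_val: "csum (dw (p * q)) = ennreal (1 / p)"
proof -
  have x: "0 \<le> p * q" using pq by simp
  have eq0: "csum (dw (p * q)) = 1 + ennreal (p * q) * (csum (dw (p * q)) * csum (dw (p * q)))"
  proof -
    have "csum (\<lambda>v. dw (p * q) v * 1) = 1 + ennreal (p * q) * csum (\<lambda>a. csum (\<lambda>b. dw (p * q) a * dw (p * q) b * 1))"
      by (rule T_lemma[OF x])
    then show ?thesis by (simp only: mult_1_right csum_sep)
  qed
  define T where "T = csum (dw (p * q))"
  have eq: "T = 1 + ennreal (p * q) * (T * T)" using eq0 unfolding T_def .
  have fin: "T \<le> ennreal (1 / p)" unfolding T_def by (rule T_bound)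
  then obtain t where t: "T = ennreal t" "0 \<le> t"
    using fin by (cases T rule: ennreal_cases) (auto simp: top_unique)
  have tle: "t \<le> 1 / p" using fin t pq by (simp add: ennreal_le_iff)
  have "ennreal t = ennreal (1 + p * q * (t * t))"
    using eq t x by (simp add: ennreal_mult' ennreal_plus)
  then have teq: "t = 1 + p * q * (t * t)" using t x by (subst (asm) ennreal_inj) auto
  have "(p * t - 1) * (q * t - 1) = 0"
  proof -
    have "(p * t - 1) * (q * t - 1) = p * q * (t * t) - (p + q) * t + 1" by (simp add: algebra_simps)
    then show ?thesis using teq pq(3) by simp
  qed
  moreover have "q * t \<noteq> 1"
  proof
    assume "q * t = 1"
    then have "t = 1 / q" using pq by (simp add: field_simps)
    then have "1 / q \<le> 1 / p" using tle by simp
    moreover have "1 / p < 1 / q" by (rule divide_strict_left_mono) (use pq in auto)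
    ultimately show False by simp
  qed
  ultimately have "p * t = 1" by simp
  then have "t = 1 / p" using pq by (simp add: field_simps)
  then show ?thesis using t unfolding T_def by simp
qed

end


lemma take_rep_app: "take k (a @ False # b) = replicate k True \<longleftrightarrow> take k a = replicate k True"
proof (cases "k \<le> length a")
  case True
  then show ?thesis by simp
next
  case False
  then obtain r where r: "k - length a = Suc r" by (cases "k - length a") auto
  have "take k (a @ False # b) = a @ False # take r b" using False r by simp
  then have Fin: "False \<in> set (take k (a @ False # b))" by simp
  have "take k (a @ False # b) \<noteq> replicate k True"
  proof
    assume "take k (a @ False # b) = replicate k True"
    with Fin have "False \<in> set (replicate k True)" by (simp only:)
    then show False by simp
  qed
  moreover have "length (take k a) \<noteq> length (replicate k True)" using False by simp
  then have "take k a \<noteq> replicate k True" by auto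
  ultimately show ?thesis by simp
qed

lemma em: "0 \<le> a \<Longrightarrow> 0 \<le> b \<Longrightarrow> ennreal a * ennreal b = ennreal (a * b)"
  by (rule ennreal_mult[symmetric])

lemma csum_single: "csum (\<lambda>c. a * indicator {d} c) = a"
  unfolding csum_def by (simp add: nn_integral_cmult)

lemma csum_add: "csum (\<lambda>c. f c + g c) = csum f + csum g"
  unfolding csum_def by (subst nn_integral_add) auto

lemma csum_cmult: "csum (\<lambda>c. a * f c) = a * csum f"
  unfolding csum_def by (rule nn_integral_cmult) simp

lemma ht_rep: "ht (replicate n True) = int n" "ht (replicate n False) = - int n"
  by (induction n) auto

definition R :: "nat \<Rightarrow> bool list" where "R a = replicate a True @ replicate a False"

lemma dyck_R: "dyck (R a)"
proof -
  have "0 \<le> ht (take k (R a))" for k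
  proof (cases "k \<le> a")
    case True
    then show ?thesis by (simp add: R_def ht_rep)
  next
    case False
    then have "take k (R a) = replicate a True @ replicate (min (k - a) a) False"
      by (simp add: R_def)
    then show ?thesis by (simp add: ht_rep)
  qed
  then show ?thesis by (simp add: dyck_iff R_def ht_rep)
qed

lemma len_R: "length (R a) = 2 * a" by (simp add: R_def)

lemma inj_R: "inj R"
  by (rule injI) (metis len_R mult_left_cancel zero_neq_numeral)

lemma GS_val:
  assumes x: "0 \<le> x"
  shows "csum (\<lambda>v. dw x v * indicator (R ` {..<n}) v) = ennreal (\<Sum>a<n. x ^ a)"
proof -
  have "csum (\<lambda>v. dw x v * indicator (R ` {..<n}) v) = (\<Sum>v\<in>R ` {..<n}. dw x v * indicator (R ` {..<n}) v)"
    unfolding csum_def by (rule nn_integral_count_space') auto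
  also have "\<dots> = (\<Sum>a<n. dw x (R a))"
    by (subst sum.reindex) (auto intro: inj_on_subset[OF inj_R])
  also have "\<dots> = (\<Sum>a<n. ennreal (x ^ a))"
    by (rule sum.cong) (auto simp: dw_def dyck_R len_R)
  also have "\<dots> = ennreal (\<Sum>a<n. x ^ a)"
    using x by (simp add: sum_ennreal)
  finally show ?thesis .
qed

context
  fixes p q :: real
  assumes pq: "0 < q" "q < p" "p + q = 1"
begin

lemma G_val: "csum (\<lambda>v. dw (p * q) v * indicator {v. take k v = replicate k True} v) = ennreal (q ^ k / p)"
proof (induction k)
  case 0
  then show ?case using T_val[OF pq] by simp
next
  case (Suc k)
  have x: "0 \<le> p * q" using pq by simp
  have "csum (\<lambda>v. dw (p * q) v * indicator {v. take (Suc k) v = replicate (Suc k) True} v) =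
     0 + ennreal (p * q) * csum (\<lambda>a. csum (\<lambda>b. (dw (p * q) a * indicator {v. take k v = replicate k True} a) * dw (p * q) b))"
    by (subst T_lemma[OF x]) (simp add: indicator_def take_rep_app mult_ac del: take_append)
  also have "\<dots> = ennreal (p * q) * (ennreal (q ^ k / p) * ennreal (1 / p))"
    by (simp only: csum_sep Suc.IH T_val[OF pq]) simp
  also have "\<dots> = ennreal (q ^ Suc k / p)"
  proof -
    have e1: "ennreal (q ^ k / p) * ennreal (1 / p) = ennreal (q ^ k / p * (1 / p))"
      by (rule em) (use pq in auto)
    have "ennreal (p * q) * (ennreal (q ^ k / p) * ennreal (1 / p)) = ennreal (p * q * (q ^ k / p * (1 / p)))"
      unfolding e1 by (rule em) (use pq in auto)
    also have "p * q * (q ^ k / p * (1 / p)) = q ^ Suc k / p" using pq by (simp add: field_simps)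
    finally show ?thesis .
  qed
  finally show ?case .
qed

end


definition Phi :: "bool list \<Rightarrow> cycle" where "Phi v = (True # True # v @ [False], False)"
abbreviation "c1 \<equiv> ([False], False) :: cycle"
abbreviation "c2 \<equiv> ([True, False, True], False) :: cycle"
abbreviation "c3 \<equiv> ([True, False, False], True) :: cycle"
abbreviation "c4 \<equiv> ([True, False, False], False) :: cycle"

lemma inj_Phi: "inj Phi" by (rule injI) (simp add: Phi_def)

lemma Phi_ne: "Phi v \<noteq> c1" "Phi v \<noteq> c2" "Phi v \<noteq> c3" "Phi v \<noteq> c4"
  by (auto simp: Phi_def)

lemma cp_Phi: "cycle_prob p q \<gamma> (Phi v) = (if dyck v then q^2 * p * (p * q) ^ (length v div 2) else 0)"
proof -
  have "(\<exists>v'. True # True # v @ [False] = True # True # v' @ [False] \<and> dyck v') \<longleftrightarrow> dyck v" by auto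
  then show ?thesis unfolding cycle_prob_def Phi_def by auto
qed

lemma cp_other:
  assumes "c \<noteq> c1" "c \<noteq> c2" "c \<noteq> c3" "c \<noteq> c4" "c \<notin> range Phi"
  shows "cycle_prob p q \<gamma> c = 0"
proof -
  obtain w g where c: "c = (w, g)" by (cases c)
  show ?thesis
  proof (cases "\<exists>v. w = True # True # v @ [False] \<and> dyck v")
    case True
    then obtain v where v: "w = True # True # v @ [False]" by blast
    then have g: "g" using assms(5) c by (cases g) (auto simp: Phi_def)
    show ?thesis using g v unfolding c cycle_prob_def by auto
  next
    case False
    then show ?thesis using assms unfolding c cycle_prob_def by (cases g) auto
  qed
qed

lemma cp_c: "cycle_prob p q \<gamma> c1 = p" "cycle_prob p q \<gamma> c2 = p * q^2"
  "cycle_prob p q \<gamma> c3 = \<gamma> * p^2 * q" "cycle_prob p q \<gamma> c4 = (1 - \<gamma>) * p^2 * q"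
  by (auto simp: cycle_prob_def)

lemma inv_Phi: "butlast (drop 2 (fst (Phi v))) = v"
  by (simp add: Phi_def butlast_append)

context
  fixes p q \<gamma> :: real
  assumes pq: "0 < q" "q < p" "p + q = 1" and g: "0 \<le> \<gamma>" "\<gamma> \<le> 1"
begin

lemma cp_nonneg: "0 \<le> cycle_prob p q \<gamma> c"
  using pq g unfolding cycle_prob_def by (auto split: prod.splits)

lemma E_raw:
  "csum (\<lambda>c. ennreal (cycle_prob p q \<gamma> c) * f c) =
   ennreal p * f c1 + (ennreal (p * q^2) * f c2 + (ennreal (\<gamma> * p^2 * q) * f c3 +
   (ennreal ((1 - \<gamma>) * p^2 * q) * f c4 + ennreal (q^2 * p) * csum (\<lambda>v. dw (p * q) v * f (Phi v)))))"
proof -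
  define gg where "gg c = ennreal (q^2 * p) * dw (p * q) (butlast (drop 2 (fst c))) * f c" for c
  have pw: "ennreal (cycle_prob p q \<gamma> c) * f c =
     (ennreal p * f c1) * indicator {c1} c + ((ennreal (p * q^2) * f c2) * indicator {c2} c +
     ((ennreal (\<gamma> * p^2 * q) * f c3) * indicator {c3} c + ((ennreal ((1 - \<gamma>) * p^2 * q) * f c4) * indicator {c4} c +
      gg c * indicator (range Phi) c)))" for c
  proof -
    consider "c = c1" | "c = c2" | "c = c3" | "c = c4" | "c \<in> range Phi"
      | "c \<noteq> c1" "c \<noteq> c2" "c \<noteq> c3" "c \<noteq> c4" "c \<notin> range Phi" by blast
    then show ?thesis
    proof cases
      case 5
      then obtain v where v: "c = Phi v" by blast
      have "ennreal (cycle_prob p q \<gamma> c) = ennreal (q^2 * p) * dw (p * q) v"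
        unfolding v cp_Phi dw_def using pq by (auto simp: em)
      then show ?thesis using v Phi_ne[of v] by (simp add: gg_def inv_Phi indicator_def)
    next
      case 6
      then show ?thesis using cp_other[OF 6] by (simp add: indicator_def)
    qed (auto simp: cp_c indicator_def Phi_def)
  qed
  have rng: "csum (\<lambda>c. gg c * indicator (range Phi) c) = ennreal (q^2 * p) * csum (\<lambda>v. dw (p * q) v * f (Phi v))"
  proof -
    have "csum (\<lambda>c. gg c * indicator (range Phi) c) = nn_integral (count_space (range Phi)) gg"
      unfolding csum_def by (simp add: nn_integral_count_space_indicator)
    also have "\<dots> = csum (\<lambda>v. gg (Phi v))"
      unfolding csum_def by (rule nn_integral_bij_count_space[symmetric]) (rule inj_on_imp_bij_betw[OF inj_Phi])
    also have "\<dots> = csum (\<lambda>v. ennreal (q^2 * p) * (dw (p * q) v * f (Phi v)))"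
      unfolding gg_def inv_Phi by (simp add: mult.assoc)
    also have "\<dots> = ennreal (q^2 * p) * csum (\<lambda>v. dw (p * q) v * f (Phi v))"
      by (rule csum_cmult)
    finally show ?thesis .
  qed
  show ?thesis
    apply (subst pw)
    apply (simp only: csum_add csum_single rng)
    done
qed

end


lemma refby_char:
  assumes w: "can_refer n1 xs i kz jz" "hoff xs kz + hgt (blocks (xs !! kz) ! jz) = Hz"
    "att (blocks (xs !! kz) ! jz) = Az"
  and b: "\<And>k j. can_refer n1 xs i k j \<Longrightarrow> Hz \<le> hoff xs k + hgt (blocks (xs !! k) ! j) \<and>
            (hoff xs k + hgt (blocks (xs !! k) ! j) = Hz \<longrightarrow> att (blocks (xs !! k) ! j) = Az)"
  shows "referred n1 xs i" "referred_by a n1 xs i \<longleftrightarrow> a = Az"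
proof -
  have mem: "Hz \<in> ref_heights n1 xs i" unfolding ref_heights_def using w by blast
  then show r: "referred n1 xs i" unfolding referred_def by blast
  have L: "(LEAST h. h \<in> ref_heights n1 xs i) = Hz"
  proof (rule Least_equality[where P="\<lambda>h. h \<in> ref_heights n1 xs i", OF mem])
    fix h assume "h \<in> ref_heights n1 xs i"
    then show "Hz \<le> h" unfolding ref_heights_def using b by blast
  qed
  show "referred_by a n1 xs i \<longleftrightarrow> a = Az"
    unfolding referred_by_def L using r w b by blast
qed

lemma norefer:
  assumes "\<And>k j. \<not> can_refer n1 xs i k j"
  shows "\<not> referred n1 xs i" "\<not> referred_by a n1 xs i"
  using assms unfolding referred_by_def referred_def ref_heights_def by auto

lemma card_single:
  assumes "\<And>j. is_uncle c j \<longleftrightarrow> j = iz"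
  shows "real (card {j. is_uncle c j \<and> P j}) = (if P iz then 1 else 0)"
proof -
  have "{j. is_uncle c j \<and> P j} = (if P iz then {iz} else {})" using assms by auto
  then show ?thesis by simp
qed

lemma card_none:
  assumes "\<And>j. \<not> is_uncle c j"
  shows "real (card {j. is_uncle c j \<and> P j}) = 0"
  using assms by simp

lemma hoff_0: "hoff xs 0 = 0" by (simp add: hoff_def)
lemma hoff_1: "hoff xs (Suc 0) = offlen (xs !! 0)" by (simp add: hoff_def)
lemma toff_0: "toff xs 0 = 0" by (simp add: toff_def)
lemma toff_1: "toff xs (Suc 0) = length (fst (xs !! 0))" by (simp add: toff_def)

lemma hoff_ge1: "1 \<le> k \<Longrightarrow> offlen (xs !! 0) \<le> hoff xs k"
proof -
  assume "1 \<le> k"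
  then have "(\<Sum>t\<in>{0}. offlen (xs !! t)) \<le> (\<Sum>t<k. offlen (xs !! t))"
    by (intro sum_mono2) auto
  then show ?thesis by (simp add: hoff_def)
qed

lemma hoff_ge2: "2 \<le> k \<Longrightarrow> offlen (xs !! 0) + offlen (xs !! 1) \<le> hoff xs k"
proof -
  assume "2 \<le> k"
  then have "(\<Sum>t\<in>{0, 1}. offlen (xs !! t)) \<le> (\<Sum>t<k. offlen (xs !! t))"
    by (intro sum_mono2) auto
  then show ?thesis by (simp add: hoff_def)
qed

lemma height_gen_pos: "Suc 0 \<le> height_gen w i" by (simp add: height_gen_def)

lemma hgt_pos: "j < length (blocks c) \<Longrightarrow> 1 \<le> hgt (blocks c ! j)"
  unfolding blocks_def
  by (auto split: prod.splits simp: nth_Cons' height_gen_pos)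


lemma in0:
  assumes x: "xs !! 0 = x" and ub: "hgt (blocks x ! i) = 1" "pub (blocks x ! i) < jz"
  and jz: "jz < length (blocks x)" "off (blocks x ! jz)" "hgt (blocks x ! jz) = 2" "att (blocks x ! jz) = Az"
  and uniq: "\<And>j. j < length (blocks x) \<Longrightarrow> off (blocks x ! j) \<Longrightarrow> hgt (blocks x ! j) = 2 \<Longrightarrow> att (blocks x ! j) = Az"
  and ol: "2 \<le> offlen x" and n1: "1 \<le> n1"
  shows "referred n1 xs i \<and> (\<forall>a. referred_by a n1 xs i \<longleftrightarrow> a = Az)"
proof -
  have w: "can_refer n1 xs i 0 jz"
    unfolding can_refer_def Let_def using x ub jz n1 by (simp add: hoff_0 toff_0)
  have b: "2 \<le> hoff xs k + hgt (blocks (xs !! k) ! j) \<and>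
            (hoff xs k + hgt (blocks (xs !! k) ! j) = 2 \<longrightarrow> att (blocks (xs !! k) ! j) = Az)"
    if cr: "can_refer n1 xs i k j" for k j
  proof -
    have c: "j < length (blocks (xs !! k))" "off (blocks (xs !! k) ! j)"
      "hgt (blocks x ! i) < hoff xs k + hgt (blocks (xs !! k) ! j)"
      using cr x unfolding can_refer_def Let_def by auto
    show ?thesis
    proof (cases k)
      case 0
      then show ?thesis using c ub uniq x by (auto simp: hoff_0)
    next
      case (Suc k')
      then have "offlen x \<le> hoff xs k" using hoff_ge1[of k xs] x by simp
      moreover have "1 \<le> hgt (blocks (xs !! k) ! j)" using hgt_pos c(1) by simp
      ultimately show ?thesis using ol ub c by auto
    qed
  qed
  show ?thesis
    using refby_char[OF w, where Hz=2 and Az=Az] b x jz by (auto simp: hoff_0)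
qed

lemma blocks_c2: "blocks c2 = [Blk True None True 1 1, Blk False None False 1 1, Blk True (Some 0) True 2 2]"
  by (simp add: blocks_def)
lemma blocks_c3: "blocks c3 = [Blk True None True 1 1, Blk False None False 1 1, Blk False (Some 0) True 2 2]"
  by (simp add: blocks_def)
lemma blocks_c4: "blocks c4 = [Blk True None False 1 1, Blk False None True 1 1, Blk False (Some 1) True 2 2]"
  by (simp add: blocks_def)
lemma blocks_c1: "blocks c1 = [Blk False None True 0 1]"
  by (simp add: blocks_def prev_same_def height_gen_def)

lemma less3: "(j::nat) < 3 \<longleftrightarrow> j = 0 \<or> j = 1 \<or> j = 2" by auto

lemma vals_c1: "xs !! 0 = c1 \<Longrightarrow> U n1 xs = 0 \<and> U_h n1 xs = 0 \<and> U_s n1 xs = 0"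
proof -
  assume x: "xs !! 0 = c1"
  have "\<not> is_uncle c1 j" for j by (auto simp: is_uncle_def blocks_c1 less_Suc_eq)
  then show ?thesis unfolding U_def U_h_def U_s_def x using card_none by blast
qed

lemma vals_c2: assumes "xs !! 0 = c2" "1 \<le> n1" shows "U n1 xs = 1 \<and> U_h n1 xs = 0 \<and> U_s n1 xs = 1"
proof -
  have u: "is_uncle c2 j \<longleftrightarrow> j = 1" for j by (auto simp: is_uncle_def blocks_c2 less_Suc_eq)
  have r: "referred n1 xs 1 \<and> (\<forall>a. referred_by a n1 xs 1 \<longleftrightarrow> a = True)"
    by (rule in0[OF assms(1), of 1 2 True]) (use assms(2) in \<open>auto simp: blocks_c2 offlen_def less_Suc_eq\<close>)
  show ?thesis unfolding U_def U_h_def U_s_def assms(1) card_single[OF u] using r by simp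
qed

lemma vals_c3: assumes "xs !! 0 = c3" "1 \<le> n1" shows "U n1 xs = 1 \<and> U_h n1 xs = 1 \<and> U_s n1 xs = 0"
proof -
  have u: "is_uncle c3 j \<longleftrightarrow> j = 1" for j by (auto simp: is_uncle_def blocks_c3 less_Suc_eq)
  have r: "referred n1 xs 1 \<and> (\<forall>a. referred_by a n1 xs 1 \<longleftrightarrow> a = False)"
    by (rule in0[OF assms(1), of 1 2 False]) (use assms(2) in \<open>auto simp: blocks_c3 offlen_def less_Suc_eq\<close>)
  show ?thesis unfolding U_def U_h_def U_s_def assms(1) card_single[OF u] using r by simp
qed

lemma vals_c4: assumes "xs !! 0 = c4" "1 \<le> n1" shows "U n1 xs = 1 \<and> U_h n1 xs = 1 \<and> U_s n1 xs = 0"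
proof -
  have u: "is_uncle c4 j \<longleftrightarrow> j = 0" for j by (auto simp: is_uncle_def blocks_c4 less_Suc_eq)
  have r: "referred n1 xs 0 \<and> (\<forall>a. referred_by a n1 xs 0 \<longleftrightarrow> a = False)"
    by (rule in0[OF assms(1), of 0 2 False]) (use assms(2) in \<open>auto simp: blocks_c4 offlen_def less_Suc_eq\<close>)
  show ?thesis unfolding U_def U_h_def U_s_def assms(1) card_single[OF u] using r by simp
qed


definition cT :: "bool list \<Rightarrow> nat \<Rightarrow> nat" where "cT w j = card {t. t < j \<and> w ! t}"
definition lead :: "bool list \<Rightarrow> nat" where "lead v = length (takeWhile id v)"

lemma blocks_map:
  assumes "w \<noteq> [True, False, True]" "w \<noteq> [True, False, False]" "w \<noteq> [False]"
  shows "length (blocks (w, g)) = length w"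
    "j < length w \<Longrightarrow> blocks (w, g) ! j = Blk (w ! j) (prev_same w j) (w ! j) (if w ! j then length w - 1 else j) (height_gen w j)"
  using assms by (auto simp: blocks_def)

lemma hg_true: "j < length w \<Longrightarrow> w ! j \<Longrightarrow> height_gen w j = 1 + cT w j"
proof -
  assume j: "j < length w" "w ! j"
  have "length (filter (\<lambda>b. b = True) (take j w)) = card {i. i < length (take j w) \<and> take j w ! i}"
    by (simp add: length_filter_conv_card)
  also have "{i. i < length (take j w) \<and> take j w ! i} = {t. t < j \<and> w ! t}"
    using j by auto
  finally show ?thesis using j by (simp add: height_gen_def cT_def)
qed

lemma hg_first_false: "j < length w \<Longrightarrow> \<not> w ! j \<Longrightarrow> (\<forall>t<j. w ! t) \<Longrightarrow> height_gen w j = 1"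
proof -
  assume j: "j < length w" "\<not> w ! j" "\<forall>t<j. w ! t"
  have "filter (\<lambda>b. b = False) (take j w) = []"
    using j by (auto simp: filter_empty_conv in_set_conv_nth)
  then show ?thesis using j by (simp add: height_gen_def)
qed

lemma cT_len: "cT w (length w) = length (filter id w)"
  by (simp add: cT_def length_filter_conv_card)

context
  fixes v :: "bool list"
begin

abbreviation "ww \<equiv> True # True # v @ [False]"
abbreviation "iz \<equiv> lead v + 2"

lemma ww_ne: "ww \<noteq> [True, False, True]" "ww \<noteq> [True, False, False]" "ww \<noteq> [False]"
  by auto

lemma fst_Phi: "fst (Phi v) = ww" by (simp add: Phi_def)
lemma Phi_eq: "Phi v = (ww, False)" by (simp add: Phi_def)

lemma tw_len: "length (takeWhile id ww) = iz"
proof (cases "\<forall>x\<in>set v. x")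
  case True
  then have "length (takeWhile id v) = length v" by (induction v) auto
  then show ?thesis using True by (simp add: takeWhile_append lead_def)
next
  case False
  then show ?thesis by (auto simp: takeWhile_append lead_def)
qed

lemma iz_lt: "iz < length ww"
proof -
  have "lead v \<le> length v" unfolding lead_def by (rule length_takeWhile_le)
  then show ?thesis by simp
qed

lemma before_iz: "t < iz \<Longrightarrow> ww ! t"
proof -
  assume t: "t < iz"
  then have "t < length (takeWhile id ww)" using tw_len by simp
  then have "takeWhile id ww ! t = ww ! t" by (rule takeWhile_nth)
  moreover have "takeWhile id ww ! t \<in> set (takeWhile id ww)" using \<open>t < length (takeWhile id ww)\<close> by (rule nth_mem)
  ultimately show ?thesis by (metis id_apply set_takeWhileD)
qed

lemma at_iz: "\<not> ww ! iz"
proof -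
  have "length (takeWhile id ww) < length ww" using tw_len iz_lt by simp
  from nth_length_takeWhile[OF this] show ?thesis using tw_len by simp
qed

lemma blen: "length (blocks (Phi v)) = length ww"
  unfolding Phi_eq using blocks_map(1)[OF ww_ne] .

lemma bnth: "j < length ww \<Longrightarrow> blocks (Phi v) ! j = Blk (ww ! j) (prev_same ww j) (ww ! j) (if ww ! j then length ww - 1 else j) (height_gen ww j)"
  unfolding Phi_eq using blocks_map(2)[OF ww_ne] .

lemma uncle_Phi: "is_uncle (Phi v) j \<longleftrightarrow> j = iz"
proof
  assume "j = iz"
  moreover have "prev_same ww iz = None"
    unfolding prev_same_def using before_iz at_iz by auto
  ultimately show "is_uncle (Phi v) j"
    unfolding is_uncle_def using iz_lt at_iz by (simp add: blen bnth)
next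
  assume u: "is_uncle (Phi v) j"
  then have j: "j < length ww" "\<not> ww ! j" unfolding is_uncle_def by (auto simp: blen bnth)
  have "\<not> j < iz" using before_iz j by blast
  moreover have "\<not> iz < j"
  proof
    assume lt: "iz < j"
    define t where "t = (GREATEST t. t < j \<and> ww ! t = ww ! j)"
    have ex: "\<exists>t<j. ww ! t = ww ! j" using lt at_iz j by auto
    have ps: "prev_same ww j = Some t" unfolding prev_same_def t_def using ex by simp
    have "t < j \<and> ww ! t = ww ! j" unfolding t_def
      by (rule GreatestI_ex_nat[where b=j]) (use ex in auto)
    then have "t < length ww" "\<not> ww ! t" using j by auto
    then have "\<not> off (blocks (Phi v) ! t)" by (simp add: bnth)
    moreover have "par (blocks (Phi v) ! j) = Some t" using ps j by (simp add: bnth)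
    ultimately show False using u unfolding is_uncle_def by simp
  qed
  ultimately show "j = iz" by simp
qed

lemma ub_facts: "hgt (blocks (Phi v) ! iz) = 1" "pub (blocks (Phi v) ! iz) = iz" "att (blocks (Phi v) ! iz) = False"
  using iz_lt at_iz before_iz by (auto simp: bnth hg_first_false)

lemma off_att: "j < length ww \<Longrightarrow> off (blocks (Phi v) ! j) = ww ! j \<and> att (blocks (Phi v) ! j) = ww ! j"
  by (simp add: bnth)

lemma hgt_true: "j < length ww \<Longrightarrow> ww ! j \<Longrightarrow> hgt (blocks (Phi v) ! j) = 1 + cT ww j"
  by (simp add: bnth hg_true)

lemma bmap: "blocks (Phi v) = map (\<lambda>i. Blk (ww ! i) (prev_same ww i) (ww ! i) (if ww ! i then length ww - 1 else i) (height_gen ww i)) [0..<length ww]"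
  unfolding Phi_eq blocks_def using ww_ne by (simp only: prod.case if_False) simp

lemma offlen_Phi: "offlen (Phi v) = cT ww (length ww)"
proof -
  have "offlen (Phi v) = length (filter (\<lambda>i. ww ! i) [0..<length ww])"
    unfolding offlen_def bmap by (simp add: filter_map comp_def)
  also have "\<dots> = card {i. i < length ww \<and> ww ! i}"
  proof -
    have "length (filter (\<lambda>i. ww ! i) [0..<length ww]) = card {i. i < length [0..<length ww] \<and> ww ! ([0..<length ww] ! i)}"
      by (rule length_filter_conv_card)
    also have "{i. i < length [0..<length ww] \<and> ww ! ([0..<length ww] ! i)} = {i. i < length ww \<and> ww ! i}"
      by (auto simp del: upt_Suc)
    finally show ?thesis .
  qed
  finally show ?thesis by (simp add: cT_def)
qed

lemma cT_ge: "iz < j \<Longrightarrow> iz \<le> cT ww j"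
proof -
  assume "iz < j"
  then have "{..<iz} \<subseteq> {t. t < j \<and> ww ! t}" using before_iz by auto
  then have "card {..<iz} \<le> card {t. t < j \<and> ww ! t}" by (rule card_mono[rotated]) auto
  then show ?thesis by (simp add: cT_def)
qed

lemma m_ge: "iz \<le> cT ww (length ww)" using cT_ge iz_lt by simp

lemma first_after:
  assumes "iz < cT ww (length ww)"
  shows "\<exists>j. iz < j \<and> j < length ww \<and> ww ! j \<and> cT ww j = iz"
proof -
  define P where "P j \<longleftrightarrow> iz < j \<and> j < length ww \<and> ww ! j" for j
  have ex: "\<exists>j. P j"
  proof (rule ccontr)
    assume "\<not> (\<exists>j. P j)"
    have "{t. t < length ww \<and> ww ! t} \<subseteq> {..<iz}"
    proof
      fix t assume t: "t \<in> {t. t < length ww \<and> ww ! t}"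
      show "t \<in> {..<iz}"
      proof (rule ccontr)
        assume "t \<notin> {..<iz}"
        then have "iz \<le> t" by simp
        moreover have "t \<noteq> iz" using t at_iz by auto
        ultimately have "P t" using t unfolding P_def by simp
        then show False using \<open>\<not> (\<exists>j. P j)\<close> by blast
      qed
    qed
    then have "card {t. t < length ww \<and> ww ! t} \<le> iz" by (metis card_lessThan card_mono finite_lessThan)
    then show False using assms by (simp add: cT_def)
  qed
  define j where "j = (LEAST j. P j)"
  have Pj: "P j" unfolding j_def by (rule LeastI_ex[OF ex])
  have "{t. t < j \<and> ww ! t} = {..<iz}"
  proof
    show "{..<iz} \<subseteq> {t. t < j \<and> ww ! t}" using Pj before_iz by (auto simp: P_def)
    show "{t. t < j \<and> ww ! t} \<subseteq> {..<iz}"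
    proof
      fix t assume t: "t \<in> {t. t < j \<and> ww ! t}"
      show "t \<in> {..<iz}"
      proof (rule ccontr)
        assume "t \<notin> {..<iz}"
        then have "iz \<le> t" by simp
        moreover have "t \<noteq> iz" using t at_iz by auto
        ultimately have "P t" using t Pj by (auto simp: P_def)
        then have "j \<le> t" unfolding j_def by (rule Least_le)
        then show False using t by simp
      qed
    qed
  qed
  then have "cT ww j = iz" by (simp add: cT_def)
  then show ?thesis using Pj by (auto simp: P_def)
qed

lemma none_after:
  assumes "cT ww (length ww) = iz" "iz < j" "j < length ww"
  shows "\<not> ww ! j"
proof
  assume wj: "ww ! j"
  have "insert j {..<iz} \<subseteq> {t. t < length ww \<and> ww ! t}" using wj assms before_iz iz_lt by auto
  then have "card (insert j {..<iz}) \<le> card {t. t < length ww \<and> ww ! t}" by (rule card_mono[rotated]) auto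
  then have "Suc iz \<le> cT ww (length ww)" using assms(2) by (simp add: cT_def)
  then show False using assms(1) by simp
qed

lemma m_eq: "cT ww (length ww) = 2 + length (filter id v)" unfolding cT_len by simp

end


definition supp :: "cycle \<Rightarrow> bool" where
  "supp c \<longleftrightarrow> c = c1 \<or> c = c2 \<or> c = c3 \<or> c = c4 \<or> (\<exists>u. c = Phi u)"

definition hon :: "cycle \<Rightarrow> bool" where "hon c \<longleftrightarrow> c = c1 \<or> c = c4"

lemma cT_0: "cT w 0 = 0" by (simp add: cT_def)

lemma y_Phi:
  shows "\<exists>j<length (blocks (Phi u)). off (blocks (Phi u) ! j) \<and> hgt (blocks (Phi u) ! j) = 1"
    "\<forall>j<length (blocks (Phi u)). off (blocks (Phi u) ! j) \<and> hgt (blocks (Phi u) ! j) = 1 \<longrightarrow> att (blocks (Phi u) ! j)"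
    "1 \<le> offlen (Phi u)"
proof -
  let ?w = "True # True # u @ [False]"
  have "0 < length ?w" "?w ! 0" by auto
  then show "\<exists>j<length (blocks (Phi u)). off (blocks (Phi u) ! j) \<and> hgt (blocks (Phi u) ! j) = 1"
    using off_att[of 0 u] hgt_true[of 0 u] by (auto simp: blen cT_0 intro!: exI[of _ 0])
  show "\<forall>j<length (blocks (Phi u)). off (blocks (Phi u) ! j) \<and> hgt (blocks (Phi u) ! j) = 1 \<longrightarrow> att (blocks (Phi u) ! j)"
    using off_att[of _ u] blen[of u] by auto
  show "1 \<le> offlen (Phi u)" using m_ge[of u] offlen_Phi[of u] by simp
qed

lemma y_facts:
  assumes "supp y"
  shows "\<exists>j<length (blocks y). off (blocks y ! j) \<and> hgt (blocks y ! j) = 1"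
    "\<And>j. j < length (blocks y) \<Longrightarrow> off (blocks y ! j) \<Longrightarrow> hgt (blocks y ! j) = 1 \<Longrightarrow> att (blocks y ! j) = (\<not> hon y)"
    "1 \<le> offlen y"
proof -
  have "(\<exists>j<length (blocks y). off (blocks y ! j) \<and> hgt (blocks y ! j) = 1) \<and>
    (\<forall>j<length (blocks y). off (blocks y ! j) \<and> hgt (blocks y ! j) = 1 \<longrightarrow> att (blocks y ! j) = (\<not> hon y)) \<and>
    1 \<le> offlen y"
    using assms unfolding supp_def
  proof (elim disjE exE)
    fix u assume yu: "y = Phi u"
    have "\<not> hon y" using yu Phi_ne[of u] by (auto simp: hon_def)
    then show ?thesis using y_Phi[of u] yu by auto
  qed (auto simp: blocks_c1 blocks_c2 blocks_c3 blocks_c4 hon_def offlen_def less_Suc_eq)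
  then show "\<exists>j<length (blocks y). off (blocks y ! j) \<and> hgt (blocks y ! j) = 1"
    "\<And>j. j < length (blocks y) \<Longrightarrow> off (blocks y ! j) \<Longrightarrow> hgt (blocks y ! j) = 1 \<Longrightarrow> att (blocks y ! j) = (\<not> hon y)"
    "1 \<le> offlen y" by auto
qed


lemma vals_Phi:
  assumes x: "xs !! 0 = Phi v" and y: "xs !! 1 = y" "supp y" and n1: "1 \<le> n1"
  defines "m \<equiv> cT (True # True # v @ [False]) (length (True # True # v @ [False]))"
  shows "U n1 xs = (if lead v + 2 \<le> n1 then 1 else 0) \<and>
         U_h n1 xs = (if lead v + 2 \<le> n1 \<and> m = lead v + 2 \<and> hon y then 1 else 0) \<and>
         U_s n1 xs = (if lead v + 2 \<le> n1 \<and> \<not> (m = lead v + 2 \<and> hon y) then 1 else 0)"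
proof -
  let ?w = "True # True # v @ [False]"
  let ?i = "lead v + 2"
  have x': "shd xs = Phi v" using x by simp
  have ol: "offlen (Phi v) = m" unfolding m_def by (rule offlen_Phi)
  have mge: "?i \<le> m" unfolding m_def by (rule m_ge)
  have cr: "can_refer n1 xs ?i k j \<longleftrightarrow> j < length (blocks (xs !! k)) \<and> off (blocks (xs !! k) ! j) \<and>
      1 < hoff xs k + hgt (blocks (xs !! k) ! j) \<and> hoff xs k + hgt (blocks (xs !! k) ! j) \<le> 1 + n1 \<and>
      ?i < toff xs k + j" for k j
    unfolding can_refer_def Let_def x using ub_facts[of v] by auto
  have L0: "?w ! j \<and> ?i < j \<and> j < length ?w \<and> ?i + 1 \<le> hgt (blocks (Phi v) ! j) \<and> att (blocks (Phi v) ! j)"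
    if "can_refer n1 xs ?i 0 j" for j
  proof -
    have j: "j < length ?w" "off (blocks (Phi v) ! j)" "?i < j"
      using that unfolding cr using x by (auto simp: toff_0 blen)
    have wj: "?w ! j" using j off_att[of j v] by simp
    have "?i \<le> cT ?w j" using cT_ge[of v j] j by simp
    then show ?thesis using hgt_true[of j v] j wj off_att[of j v] by simp
  qed
  have L1: "m + 1 \<le> hoff xs k + hgt (blocks (xs !! k) ! j)" if "1 \<le> k" "j < length (blocks (xs !! k))" for k j
    using hoff_ge1[OF that(1), of xs] hgt_pos[OF that(2)] x ol by simp
  have L2: "m + 2 \<le> hoff xs k + hgt (blocks (xs !! k) ! j)" if "2 \<le> k" "j < length (blocks (xs !! k))" for k j
    using hoff_ge2[OF that(1), of xs] hgt_pos[OF that(2)] x y ol y_facts(3)[OF y(2)] by simp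
  have R: "(referred n1 xs ?i \<longleftrightarrow> ?i \<le> n1) \<and>
           (\<forall>a. referred_by a n1 xs ?i \<longleftrightarrow> ?i \<le> n1 \<and> a = (\<not> (m = ?i \<and> hon y)))"
  proof (cases "?i \<le> n1")
    case False
    have "\<not> can_refer n1 xs ?i k j" for k j
    proof
      assume c: "can_refer n1 xs ?i k j"
      show False
      proof (cases k)
        case 0
        then show False using L0[of j] c False x' unfolding cr by (simp add: hoff_0)
      next
        case (Suc k')
        then show False using L1[of k j] c False mge unfolding cr by simp
      qed
    qed
    then show ?thesis using norefer False by blast
  next
    case True
    show ?thesis
    proof (cases "m = ?i")
      case False
      then have "?i < m" using mge by simp
      then obtain j0 where j0: "?i < j0" "j0 < length ?w" "?w ! j0" "cT ?w j0 = ?i"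
        using first_after[of v] unfolding m_def by blast
      have hj: "hgt (blocks (Phi v) ! j0) = ?i + 1" using hgt_true[of j0 v] j0 by simp
      have w: "can_refer n1 xs ?i 0 j0"
        unfolding cr using j0 hj True x off_att[of j0 v] by (simp add: hoff_0 toff_0 blen)
      have b: "?i + 1 \<le> hoff xs k + hgt (blocks (xs !! k) ! j) \<and>
            (hoff xs k + hgt (blocks (xs !! k) ! j) = ?i + 1 \<longrightarrow> att (blocks (xs !! k) ! j) = True)"
        if c: "can_refer n1 xs ?i k j" for k j
      proof (cases k)
        case 0
        then show ?thesis using L0[of j] c x by (simp add: hoff_0)
      next
        case (Suc k')
        then show ?thesis using L1[of k j] c \<open>?i < m\<close> unfolding cr by auto
      qed
      have "referred n1 xs ?i \<and> (\<forall>a. referred_by a n1 xs ?i \<longleftrightarrow> a = True)"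
        using refby_char[OF w, where Hz="?i + 1" and Az=True] b x hj off_att[of j0 v] j0
        by (auto simp: hoff_0)
      then show ?thesis using True False by auto
    next
      case mi: True
      obtain j0 where j0: "j0 < length (blocks y)" "off (blocks y ! j0)" "hgt (blocks y ! j0) = 1"
        using y_facts(1)[OF y(2)] by blast
      have a0: "att (blocks y ! j0) = (\<not> hon y)" using y_facts(2)[OF y(2) j0] .
      have w: "can_refer n1 xs ?i 1 j0"
        unfolding cr using j0 True x y ol mi iz_lt[of v] by (simp add: hoff_1 toff_1 Phi_def)
      have b: "?i + 1 \<le> hoff xs k + hgt (blocks (xs !! k) ! j) \<and>
            (hoff xs k + hgt (blocks (xs !! k) ! j) = ?i + 1 \<longrightarrow> att (blocks (xs !! k) ! j) = (\<not> hon y))"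
        if c: "can_refer n1 xs ?i k j" for k j
      proof (cases k)
        case 0
        then have "?w ! j" "?i < j" "j < length ?w" using L0[of j] c by auto
        then show ?thesis using none_after[of v j] mi unfolding m_def by simp
      next
        case (Suc k')
        show ?thesis
        proof (cases k')
          case 0
          then have k1: "k = 1" using Suc by simp
          have jl: "j < length (blocks y)" "off (blocks y ! j)" using c y unfolding cr k1 by auto
          have "hoff xs 1 = m" using x ol by (simp add: hoff_1)
          moreover have "1 \<le> hgt (blocks y ! j)" using hgt_pos[OF jl(1)] .
          ultimately show ?thesis using y_facts(2)[OF y(2) jl] mi k1 y by auto
        next
          case (Suc k'')
          then have "2 \<le> k" using \<open>k = Suc k'\<close> by simp
          then show ?thesis using L2[of k j] c mi unfolding cr by auto
        qed
      qed
      have "referred n1 xs ?i \<and> (\<forall>a. referred_by a n1 xs ?i \<longleftrightarrow> a = (\<not> hon y))"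
        using refby_char[OF w, where Hz="?i + 1" and Az="\<not> hon y"] b x y j0 a0 ol mi
        by (auto simp: hoff_1)
      then show ?thesis using True mi by auto
    qed
  qed
  show ?thesis
    unfolding U_def U_h_def U_s_def x card_single[OF uncle_Phi[of v]] using R by auto
qed


context
  fixes p q \<gamma> :: real
  assumes pq: "0 < q" "q < p" "p + q = 1" and g: "0 \<le> \<gamma>" "\<gamma> \<le> 1"
begin

lemma E_real_raw:
  assumes F: "\<And>c. 0 \<le> F c" and K: "0 \<le> K"
    and KK: "csum (\<lambda>v. dw (p * q) v * ennreal (F (Phi v))) = ennreal K"
  shows "csum (\<lambda>c. ennreal (cycle_prob p q \<gamma> c) * ennreal (F c)) =
    ennreal (p * F c1 + p * q^2 * F c2 + \<gamma> * p^2 * q * F c3 + (1 - \<gamma>) * p^2 * q * F c4 + q^2 * p * K)"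
proof -
  have nn: "0 \<le> p" "0 \<le> q" "0 \<le> 1 - \<gamma>" using pq g by auto
  show ?thesis
    unfolding E_raw[OF pq g] KK using F[of c1] F[of c2] F[of c3] F[of c4] K nn g
    by (simp add: ennreal_plus ennreal_mult add.assoc)
qed

lemma mass: "(\<integral>\<^sup>+c. ennreal (cycle_prob p q \<gamma> c) \<partial>count_space UNIV) = 1"
proof -
  have "csum (\<lambda>v. dw (p * q) v * ennreal ((\<lambda>_. 1) (Phi v))) = ennreal (1 / p)"
    using T_val[OF pq] by (simp add: csum_def)
  from E_real_raw[of "\<lambda>_. 1", OF _ _ this]
  have "csum (\<lambda>c. ennreal (cycle_prob p q \<gamma> c) * ennreal 1) =
    ennreal (p + p * q^2 + \<gamma> * p^2 * q + (1 - \<gamma>) * p^2 * q + q^2 * p * (1 / p))"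
    using pq by simp
  also have "p + p * q^2 + \<gamma> * p^2 * q + (1 - \<gamma>) * p^2 * q + q^2 * p * (1 / p) = 1"
  proof -
    have e: "q = 1 - p" using pq by simp
    have "p + p * q^2 + \<gamma> * p^2 * q + (1 - \<gamma>) * p^2 * q + q^2 * p * (1 / p) = p + p * q^2 + p^2 * q + q^2"
      using pq by (simp add: field_simps power2_eq_square)
    also have "\<dots> = 1" unfolding e by (simp add: algebra_simps power2_eq_square)
    finally show ?thesis .
  qed
  finally show ?thesis by (simp add: csum_def)
qed

lemma pmf_cycle: "pmf (cycle_pmf p q \<gamma>) c = cycle_prob p q \<gamma> c"
  unfolding cycle_pmf_def by (rule pmf_embed_pmf[OF cp_nonneg[OF pq g] mass])

lemma set_cycle: "set_pmf (cycle_pmf p q \<gamma>) = {c. cycle_prob p q \<gamma> c \<noteq> 0}"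
  unfolding cycle_pmf_def by (rule set_embed_pmf[OF cp_nonneg[OF pq g] mass])

lemma supp_set: "c \<in> set_pmf (cycle_pmf p q \<gamma>) \<Longrightarrow> supp c"
  unfolding set_cycle supp_def using cp_other by blast

lemma E_real:
  assumes F: "\<And>c. 0 \<le> F c" and K: "0 \<le> K"
    and KK: "csum (\<lambda>v. dw (p * q) v * ennreal (F (Phi v))) = ennreal K"
  shows "(\<integral>\<^sup>+c. ennreal (F c) \<partial>measure_pmf (cycle_pmf p q \<gamma>)) =
    ennreal (p * F c1 + p * q^2 * F c2 + \<gamma> * p^2 * q * F c3 + (1 - \<gamma>) * p^2 * q * F c4 + q^2 * p * K)"
  unfolding nn_integral_measure_pmf pmf_cycle E_real_raw[OF F K KK, symmetric] csum_def ..

end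

lemma SI:
  fixes M :: "'a pmf"
  assumes f: "f \<in> borel_measurable (stream_space (measure_pmf M))" and nn: "\<And>xs. 0 \<le> f xs"
    and phi: "\<And>x y X. x \<in> set_pmf M \<Longrightarrow> y \<in> set_pmf M \<Longrightarrow> f (x ## y ## X) = \<phi> x y"
  shows "integral\<^sup>L (stream_space (measure_pmf M)) f =
     enn2real (\<integral>\<^sup>+x. (\<integral>\<^sup>+y. ennreal (\<phi> x y) \<partial>measure_pmf M) \<partial>measure_pmf M)"
proof -
  interpret P: prob_space "measure_pmf M" by (rule prob_space_measure_pmf)
  interpret S: prob_space "stream_space (measure_pmf M)" by (rule prob_space.prob_space_stream_space[OF prob_space_measure_pmf])
  have fm: "(\<lambda>xs. ennreal (f xs)) \<in> borel_measurable (stream_space (measure_pmf M))" using f by simp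
  have fx: "(\<lambda>X. ennreal (f (x ## X))) \<in> borel_measurable (stream_space (measure_pmf M))" for x
    by (rule measurable_compose[OF _ fm]) (rule measurable_Stream; simp)
  have "integral\<^sup>L (stream_space (measure_pmf M)) f = enn2real (\<integral>\<^sup>+xs. ennreal (f xs) \<partial>stream_space (measure_pmf M))"
    by (rule integral_eq_nn_integral) (use f nn in auto)
  also have "(\<integral>\<^sup>+xs. ennreal (f xs) \<partial>stream_space (measure_pmf M)) =
     (\<integral>\<^sup>+x. (\<integral>\<^sup>+X. ennreal (f (x ## X)) \<partial>stream_space (measure_pmf M)) \<partial>measure_pmf M)"
    by (rule prob_space.nn_integral_stream_space[OF prob_space_measure_pmf fm])
  also have "\<dots> = (\<integral>\<^sup>+x. (\<integral>\<^sup>+y. (\<integral>\<^sup>+X. ennreal (f (x ## y ## X)) \<partial>stream_space (measure_pmf M)) \<partial>measure_pmf M) \<partial>measure_pmf M)"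
    by (rule nn_integral_cong) (rule prob_space.nn_integral_stream_space[OF prob_space_measure_pmf fx])
  also have "\<dots> = (\<integral>\<^sup>+x. (\<integral>\<^sup>+y. ennreal (\<phi> x y) \<partial>measure_pmf M) \<partial>measure_pmf M)"
  proof (rule nn_integral_cong_AE)
    show "AE x in measure_pmf M. (\<integral>\<^sup>+y. (\<integral>\<^sup>+X. ennreal (f (x ## y ## X)) \<partial>stream_space (measure_pmf M)) \<partial>measure_pmf M) =
        (\<integral>\<^sup>+y. ennreal (\<phi> x y) \<partial>measure_pmf M)"
    proof (rule AE_pmfI)
      fix x assume x: "x \<in> set_pmf M"
      show "(\<integral>\<^sup>+y. (\<integral>\<^sup>+X. ennreal (f (x ## y ## X)) \<partial>stream_space (measure_pmf M)) \<partial>measure_pmf M) =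
        (\<integral>\<^sup>+y. ennreal (\<phi> x y) \<partial>measure_pmf M)"
      proof (rule nn_integral_cong_AE, rule AE_pmfI)
        fix y assume y: "y \<in> set_pmf M"
        show "(\<integral>\<^sup>+X. ennreal (f (x ## y ## X)) \<partial>stream_space (measure_pmf M)) = ennreal (\<phi> x y)"
          using phi[OF x y] S.emeasure_space_1 by simp
      qed
    qed
  qed
  finally show ?thesis .
qed


definition vv :: "cycle \<Rightarrow> bool list" where "vv c = butlast (drop 2 (fst c))"

definition Uf :: "nat \<Rightarrow> cycle \<Rightarrow> real" where
  "Uf n1 c = (if c = c1 then 0 else if c = c2 \<or> c = c3 \<or> c = c4 then 1
     else if lead (vv c) + 2 \<le> n1 then 1 else 0)"

definition cnd :: "nat \<Rightarrow> bool list \<Rightarrow> bool" where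
  "cnd n1 v \<longleftrightarrow> lead v + 2 \<le> n1 \<and> length (filter id v) = lead v"

definition Hf :: "nat \<Rightarrow> cycle \<Rightarrow> cycle \<Rightarrow> real" where
  "Hf n1 c y = (if c = c3 \<or> c = c4 then 1 else if c = c1 \<or> c = c2 then 0
     else if cnd n1 (vv c) \<and> hon y then 1 else 0)"

lemma vv_Phi: "vv (Phi v) = v" unfolding vv_def using inv_Phi .

lemma PW:
  assumes x: "supp x" and y: "supp y" and n1: "1 \<le> n1"
  shows "U n1 (x ## y ## X) = Uf n1 x \<and> U_h n1 (x ## y ## X) = Hf n1 x y \<and> U_s n1 (x ## y ## X) = Uf n1 x - Hf n1 x y"
proof -
  let ?xs = "x ## y ## X"
  have x0: "?xs !! 0 = x" and y1: "?xs !! 1 = y" by simp_all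
  from x show ?thesis unfolding supp_def
  proof (elim disjE exE)
    assume "x = c1" then show ?thesis using vals_c1[of ?xs n1] x0 by (simp add: Uf_def Hf_def)
  next
    assume "x = c2" then show ?thesis using vals_c2[of ?xs n1] x0 n1 by (simp add: Uf_def Hf_def)
  next
    assume "x = c3" then show ?thesis using vals_c3[of ?xs n1] x0 n1 by (simp add: Uf_def Hf_def)
  next
    assume "x = c4" then show ?thesis using vals_c4[of ?xs n1] x0 n1 by (simp add: Uf_def Hf_def)
  next
    fix v assume xv: "x = Phi v"
    have V: "U n1 ?xs = (if lead v + 2 \<le> n1 then 1 else 0) \<and>
         U_h n1 ?xs = (if lead v + 2 \<le> n1 \<and> 2 + length (filter id v) = lead v + 2 \<and> hon y then 1 else 0) \<and>
         U_s n1 ?xs = (if lead v + 2 \<le> n1 \<and> \<not> (2 + length (filter id v) = lead v + 2 \<and> hon y) then 1 else 0)"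
      using vals_Phi[of ?xs v y n1] x0 y1 y n1 xv m_eq[of v] by simp
    show ?thesis using V Phi_ne[of v] unfolding xv Uf_def Hf_def vv_Phi cnd_def by auto
  qed
qed

lemma Hf_le: "Hf n1 c y \<le> Uf n1 c"
  by (auto simp: Hf_def Uf_def cnd_def)

lemma Uf_nn: "0 \<le> Uf n1 c" by (simp add: Uf_def)
lemma Hf_nn: "0 \<le> Hf n1 c y" by (simp add: Hf_def)

lemma take_rep_iff: "take k v = replicate k True \<longleftrightarrow> k \<le> lead v"
proof (induction v arbitrary: k)
  case Nil
  then show ?case by (cases k) (auto simp: lead_def)
next
  case (Cons b v)
  then show ?case by (cases k) (auto simp: lead_def)
qed

lemma lead_R: "lead (R a) = a"
proof (cases a)
  case 0
  then show ?thesis by (simp add: R_def lead_def)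
next
  case (Suc a')
  then show ?thesis by (simp add: R_def lead_def takeWhile_append)
qed

lemma cnd_R:
  assumes "dyck v" shows "cnd n1 v \<longleftrightarrow> v \<in> R ` {..<n1 - 1}"
proof
  assume c: "cnd n1 v"
  define a where "a = lead v"
  define d where "d = dropWhile id v"
  have v: "v = takeWhile id v @ d" unfolding d_def by simp
  have tw: "takeWhile id v = replicate a True"
    unfolding a_def lead_def by (metis (full_types) id_apply replicate_length_same set_takeWhileD)
  have "length (filter id v) = length (filter id (takeWhile id v)) + length (filter id d)"
    by (subst v) simp
  then have "length (filter id d) = 0" using c tw unfolding cnd_def a_def by simp
  then have dF: "\<forall>x\<in>set d. \<not> x" by (simp add: filter_empty_conv)
  then have dr: "d = replicate (length d) False" by (metis (full_types) replicate_length_same)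
  have "length (filter id v) = length (filter Not v)" using assms by (simp add: dyck_def)
  moreover have "length (filter Not v) = length d"
  proof -
    have "filter Not v = filter Not (replicate a True) @ filter Not d" by (subst v) (simp add: tw)
    moreover have "filter Not d = d" using dF by (simp add: filter_id_conv)
    ultimately show ?thesis by simp
  qed
  ultimately have "a = length d" using c unfolding cnd_def a_def by simp
  then have "v = R a" using v tw dr by (simp add: R_def)
  moreover have "a < n1 - 1" using c unfolding cnd_def a_def by linarith
  ultimately show "v \<in> R ` {..<n1 - 1}" by blast
next
  assume "v \<in> R ` {..<n1 - 1}"
  then obtain a where a: "a < n1 - 1" "v = R a" by blast
  have "length (filter id (R a)) = a" by (simp add: R_def)
  then show "cnd n1 v" using a lead_R[of a] unfolding cnd_def by simp
qed


context
  fixes p q \<gamma> :: real and n1 :: nat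
  assumes pq: "0 < q" "q < p" "p + q = 1" and g: "0 \<le> \<gamma>" "\<gamma> \<le> 1" and n1: "2 \<le> n1"
begin

abbreviation "MM \<equiv> measure_pmf (cycle_pmf p q \<gamma>)"

lemma KU: "csum (\<lambda>v. dw (p * q) v * ennreal (if lead v + 2 \<le> n1 then 1 else 0)) = ennreal (1 / p - q ^ (n1 - 1) / p)"
proof -
  define A where "A = csum (\<lambda>v. dw (p * q) v * ennreal (if lead v + 2 \<le> n1 then 1 else 0))"
  have pw: "dw (p * q) v = dw (p * q) v * ennreal (if lead v + 2 \<le> n1 then 1 else 0) +
      dw (p * q) v * indicator {v. take (n1 - 1) v = replicate (n1 - 1) True} v" for v
  proof -
    have "take (n1 - 1) v = replicate (n1 - 1) True \<longleftrightarrow> \<not> lead v + 2 \<le> n1"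
      unfolding take_rep_iff using n1 by linarith
    then show ?thesis by (auto simp: indicator_def)
  qed
  have "ennreal (1 / p) = csum (dw (p * q))" using T_val[OF pq] by simp
  also have "\<dots> = csum (\<lambda>v. dw (p * q) v * ennreal (if lead v + 2 \<le> n1 then 1 else 0) +
      dw (p * q) v * indicator {v. take (n1 - 1) v = replicate (n1 - 1) True} v)"
    by (rule arg_cong[where f=csum]) (rule ext, rule pw)
  also have "\<dots> = A + ennreal (q ^ (n1 - 1) / p)"
    unfolding csum_add A_def G_val[OF pq] ..
  finally have e: "ennreal (1 / p) = A + ennreal (q ^ (n1 - 1) / p)" .
  have "A = ennreal (1 / p) - ennreal (q ^ (n1 - 1) / p)" unfolding e by simp
  also have "\<dots> = ennreal (1 / p - q ^ (n1 - 1) / p)" using pq by (simp add: ennreal_minus)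
  finally show ?thesis unfolding A_def .
qed

lemma EU: "(\<integral>\<^sup>+x. ennreal (Uf n1 x) \<partial>MM) = ennreal (q - q ^ (n1 + 1))"
proof -
  have K: "csum (\<lambda>v. dw (p * q) v * ennreal (Uf n1 (Phi v))) = ennreal (1 / p - q ^ (n1 - 1) / p)"
    unfolding Uf_def vv_Phi using Phi_ne KU by simp
  have K0: "0 \<le> 1 / p - q ^ (n1 - 1) / p"
  proof -
    have "q ^ (n1 - 1) \<le> 1" using pq by (simp add: power_le_one)
    then show ?thesis using pq by (simp add: divide_right_mono diff_divide_distrib[symmetric])
  qed
  have "(\<integral>\<^sup>+x. ennreal (Uf n1 x) \<partial>MM) = ennreal (p * Uf n1 c1 + p * q^2 * Uf n1 c2 + \<gamma> * p^2 * q * Uf n1 c3 +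
     (1 - \<gamma>) * p^2 * q * Uf n1 c4 + q^2 * p * (1 / p - q ^ (n1 - 1) / p))"
    by (rule E_real[OF pq g Uf_nn K0 K])
  also have "p * Uf n1 c1 + p * q^2 * Uf n1 c2 + \<gamma> * p^2 * q * Uf n1 c3 +
     (1 - \<gamma>) * p^2 * q * Uf n1 c4 + q^2 * p * (1 / p - q ^ (n1 - 1) / p) = q - q ^ (n1 + 1)"
  proof -
    have qq: "q^2 * q ^ (n1 - 1) = q ^ (n1 + 1)" using n1 by (simp add: power_add[symmetric])
    have e: "p = 1 - q" using pq by simp
    have "p * Uf n1 c1 + p * q^2 * Uf n1 c2 + \<gamma> * p^2 * q * Uf n1 c3 +
       (1 - \<gamma>) * p^2 * q * Uf n1 c4 + q^2 * p * (1 / p - q ^ (n1 - 1) / p) = p * q^2 + p^2 * q + q^2 - q^2 * q ^ (n1 - 1)"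
      using pq by (simp add: Uf_def field_simps)
    also have "\<dots> = q - q ^ (n1 + 1)" unfolding qq unfolding e by (simp add: algebra_simps power2_eq_square)
    finally show ?thesis .
  qed
  finally show ?thesis .
qed

definition Ph :: real where "Ph = p + (1 - \<gamma>) * p^2 * q"
definition HX :: "cycle \<Rightarrow> real" where
  "HX c = (if c = c3 \<or> c = c4 then 1 else if c = c1 \<or> c = c2 then 0 else if cnd n1 (vv c) then Ph else 0)"

lemma Ph_eq: "Ph = p + (1 - \<gamma>) * p^2 * q" by (simp add: Ph_def)

lemma Ph_nn: "0 \<le> Ph" using pq g unfolding Ph_def by simp

lemma HX_nn: "0 \<le> HX c" using Ph_nn unfolding HX_def by simp

lemma inner_H: "(\<integral>\<^sup>+y. ennreal (Hf n1 x y) \<partial>MM) = ennreal (HX x)"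
proof (cases "x = c3 \<or> x = c4 \<or> x = c1 \<or> x = c2 \<or> \<not> cnd n1 (vv x)")
  case True
  then have "\<And>y. Hf n1 x y = HX x" unfolding Hf_def HX_def by auto
  then show ?thesis by (simp add: measure_pmf.emeasure_space_1)
next
  case False
  then have hy: "\<And>y. Hf n1 x y = (if hon y then 1 else 0)" and hx: "HX x = Ph"
    unfolding Hf_def HX_def by auto
  have K: "csum (\<lambda>v. dw (p * q) v * ennreal ((\<lambda>y. if hon y then 1 else 0) (Phi v))) = ennreal 0"
    using Phi_ne by (simp add: hon_def csum_def)
  have "(\<integral>\<^sup>+y. ennreal (Hf n1 x y) \<partial>MM) = ennreal (p * 1 + p * q^2 * 0 + \<gamma> * p^2 * q * 0 + (1 - \<gamma>) * p^2 * q * 1 + q^2 * p * 0)"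
    unfolding hy using E_real[OF pq g _ _ K] by (simp add: hon_def)
  also have "\<dots> = ennreal (HX x)" unfolding hx Ph_def by simp
  finally show ?thesis .
qed

lemma EH: "(\<integral>\<^sup>+x. (\<integral>\<^sup>+y. ennreal (Hf n1 x y) \<partial>MM) \<partial>MM) =
   ennreal (p^2 * q + Ph * p * q^2 * ((1 - (p * q) ^ (n1 - 1)) / (1 - p * q)))"
proof -
  define S where "S = (\<Sum>a<n1 - 1. (p * q) ^ a)"
  have S: "S = (1 - (p * q) ^ (n1 - 1)) / (1 - p * q)"
  proof -
    have "p * q \<noteq> 1"
    proof -
      have "p * q < 1 * 1" using pq by (intro mult_strict_mono) auto
      then show ?thesis by simp
    qed
    then show ?thesis unfolding S_def by (simp add: sum_gp_strict)
  qed
  have S0: "0 \<le> S" unfolding S_def using pq by (simp add: sum_nonneg)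
  have pw: "dw (p * q) v * ennreal (HX (Phi v)) = ennreal Ph * (dw (p * q) v * indicator (R ` {..<n1 - 1}) v)" for v
  proof (cases "dyck v")
    case True
    then show ?thesis using Phi_ne[of v] cnd_R[OF True, of n1] unfolding HX_def vv_Phi
      by (auto simp: indicator_def mult.commute)
  next
    case False
    then show ?thesis by (simp add: dw_def)
  qed
  have K: "csum (\<lambda>v. dw (p * q) v * ennreal (HX (Phi v))) = ennreal (Ph * S)"
  proof -
    have "csum (\<lambda>v. dw (p * q) v * ennreal (HX (Phi v))) = csum (\<lambda>v. ennreal Ph * (dw (p * q) v * indicator (R ` {..<n1 - 1}) v))"
      by (rule arg_cong[where f=csum]) (rule ext, rule pw)
    also have "\<dots> = ennreal Ph * ennreal S"
    proof -
      have gs: "csum (\<lambda>v. dw (p * q) v * indicator (R ` {..<n1 - 1}) v) = ennreal (\<Sum>a<n1 - 1. (p * q) ^ a)"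
        by (rule GS_val) (use pq in simp)
      show ?thesis unfolding csum_cmult gs S_def ..
    qed
    also have "\<dots> = ennreal (Ph * S)" using Ph_nn S0 by (simp add: ennreal_mult)
    finally show ?thesis .
  qed
  have "(\<integral>\<^sup>+x. (\<integral>\<^sup>+y. ennreal (Hf n1 x y) \<partial>MM) \<partial>MM) = (\<integral>\<^sup>+x. ennreal (HX x) \<partial>MM)"
    by (simp add: inner_H)
  also have "\<dots> = ennreal (p * HX c1 + p * q^2 * HX c2 + \<gamma> * p^2 * q * HX c3 + (1 - \<gamma>) * p^2 * q * HX c4 + q^2 * p * (Ph * S))"
    by (rule E_real[OF pq g HX_nn _ K]) (use Ph_nn S0 in simp)
  also have "p * HX c1 + p * q^2 * HX c2 + \<gamma> * p^2 * q * HX c3 + (1 - \<gamma>) * p^2 * q * HX c4 + q^2 * p * (Ph * S) =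
     p^2 * q + Ph * p * q^2 * ((1 - (p * q) ^ (n1 - 1)) / (1 - p * q))"
    unfolding S[symmetric] by (simp add: HX_def algebra_simps)
  finally show ?thesis .
qed

end


theorem corollary3:
  fixes p q \<gamma> :: real and n1 :: nat
  assumes "0 < q" "q < p" "p + q = 1" "0 \<le> \<gamma>" "\<gamma> \<le> 1" "2 \<le> n1"
  shows "(\<integral>xs. U_s n1 xs \<partial>stream_space (measure_pmf (cycle_pmf p q \<gamma>)))
           = (\<integral>xs. U n1 xs \<partial>stream_space (measure_pmf (cycle_pmf p q \<gamma>)))
             - (\<integral>xs. U_h n1 xs \<partial>stream_space (measure_pmf (cycle_pmf p q \<gamma>)))
       \<and> (\<integral>xs. U n1 xs \<partial>stream_space (measure_pmf (cycle_pmf p q \<gamma>)))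
             - (\<integral>xs. U_h n1 xs \<partial>stream_space (measure_pmf (cycle_pmf p q \<gamma>)))
           = q - q ^ (n1 + 1)
             - (p^2 * q + (p + (1 - \<gamma>) * p^2 * q) * p * q^2 * (1 - (p * q) ^ (n1 - 1)) / (1 - p * q))"
proof -
  note pq = assms(1-3) and g = assms(4,5) and n1 = assms(6)
  let ?M = "cycle_pmf p q \<gamma>"
  let ?S = "stream_space (measure_pmf ?M)"
  have n1': "1 \<le> n1" using n1 by simp
  have sp: "x \<in> set_pmf ?M \<Longrightarrow> supp x" for x using supp_set[OF pq g] .
  have IU: "integral\<^sup>L ?S (U n1) = enn2real (\<integral>\<^sup>+x. (\<integral>\<^sup>+y. ennreal (Uf n1 x) \<partial>measure_pmf ?M) \<partial>measure_pmf ?M)"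
  proof (rule SI[OF meas_U(1)])
    show "0 \<le> U n1 xs" for xs by (simp add: U_def)
    show "U n1 (x ## y ## X) = Uf n1 x" if "x \<in> set_pmf ?M" "y \<in> set_pmf ?M" for x y X
      using PW[OF sp[OF that(1)] sp[OF that(2)] n1'] by blast
  qed
  have IH: "integral\<^sup>L ?S (U_h n1) = enn2real (\<integral>\<^sup>+x. (\<integral>\<^sup>+y. ennreal (Hf n1 x y) \<partial>measure_pmf ?M) \<partial>measure_pmf ?M)"
  proof (rule SI[OF meas_U(2)])
    show "0 \<le> U_h n1 xs" for xs by (simp add: U_h_def)
    show "U_h n1 (x ## y ## X) = Hf n1 x y" if "x \<in> set_pmf ?M" "y \<in> set_pmf ?M" for x y X
      using PW[OF sp[OF that(1)] sp[OF that(2)] n1'] by blast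
  qed
  have IS: "integral\<^sup>L ?S (U_s n1) = enn2real (\<integral>\<^sup>+x. (\<integral>\<^sup>+y. ennreal (Uf n1 x - Hf n1 x y) \<partial>measure_pmf ?M) \<partial>measure_pmf ?M)"
  proof (rule SI[OF meas_U(3)])
    show "0 \<le> U_s n1 xs" for xs by (simp add: U_s_def)
    show "U_s n1 (x ## y ## X) = Uf n1 x - Hf n1 x y" if "x \<in> set_pmf ?M" "y \<in> set_pmf ?M" for x y X
      using PW[OF sp[OF that(1)] sp[OF that(2)] n1'] by blast
  qed
  define u where "u = q - q ^ (n1 + 1)"
  define h where "h = p^2 * q + Ph p q \<gamma> * p * q^2 * ((1 - (p * q) ^ (n1 - 1)) / (1 - p * q))"
  have EU2: "(\<integral>\<^sup>+x. (\<integral>\<^sup>+y. ennreal (Uf n1 x) \<partial>measure_pmf ?M) \<partial>measure_pmf ?M) = ennreal u"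
    using EU[OF pq g n1] unfolding u_def by (simp add: measure_pmf.emeasure_space_1)
  have EH2: "(\<integral>\<^sup>+x. (\<integral>\<^sup>+y. ennreal (Hf n1 x y) \<partial>measure_pmf ?M) \<partial>measure_pmf ?M) = ennreal h"
    using EH[OF pq g n1] unfolding h_def .
  define ES where "ES = (\<integral>\<^sup>+x. (\<integral>\<^sup>+y. ennreal (Uf n1 x - Hf n1 x y) \<partial>measure_pmf ?M) \<partial>measure_pmf ?M)"
  have add: "ennreal u = ennreal h + ES"
  proof -
    have "(\<integral>\<^sup>+x. (\<integral>\<^sup>+y. ennreal (Uf n1 x) \<partial>measure_pmf ?M) \<partial>measure_pmf ?M) =
       (\<integral>\<^sup>+x. (\<integral>\<^sup>+y. ennreal (Hf n1 x y) + ennreal (Uf n1 x - Hf n1 x y) \<partial>measure_pmf ?M) \<partial>measure_pmf ?M)"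
    proof -
      have "ennreal (Uf n1 x) = ennreal (Hf n1 x y) + ennreal (Uf n1 x - Hf n1 x y)" for x y
        using Hf_le[of n1 x y] Hf_nn[of n1 x y] by (simp flip: ennreal_plus)
      then show ?thesis by simp
    qed
    also have "\<dots> = (\<integral>\<^sup>+x. (\<integral>\<^sup>+y. ennreal (Hf n1 x y) \<partial>measure_pmf ?M) + (\<integral>\<^sup>+y. ennreal (Uf n1 x - Hf n1 x y) \<partial>measure_pmf ?M) \<partial>measure_pmf ?M)"
      by (subst nn_integral_add) auto
    also have "\<dots> = ennreal h + ES"
      unfolding ES_def EH2[symmetric] by (subst nn_integral_add) auto
    finally show ?thesis using EU2 by simp
  qed
  have pq1: "p * q \<le> 1" using pq by (intro mult_le_one) auto
  have pq2: "(p * q) ^ (n1 - 1) \<le> 1" using pq pq1 by (intro power_le_one) auto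
  have h0: "0 \<le> h" unfolding h_def using pq Ph_nn[OF pq g n1] pq1 pq2
    by (intro add_nonneg_nonneg mult_nonneg_nonneg divide_nonneg_nonneg) auto
  obtain s where s: "ES = ennreal s" "0 \<le> s"
  proof (cases ES rule: ennreal_cases)
    case (real r) then show ?thesis using that by blast
  next
    case top then show ?thesis using add by simp
  qed
  have u0: "0 \<le> u"
  proof -
    have "q ^ n1 \<le> 1" using pq by (intro power_le_one) auto
    then have "q * q ^ n1 \<le> q * 1" using pq by (intro mult_left_mono) auto
    then show ?thesis unfolding u_def by simp
  qed
  have "ennreal u = ennreal (h + s)" using add s h0 by (simp flip: ennreal_plus)
  then have us: "u = h + s" using u0 h0 s(2) by (subst (asm) ennreal_inj) auto
  have vU: "integral\<^sup>L ?S (U n1) = u" using IU EU2 u0 by simp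
  have vH: "integral\<^sup>L ?S (U_h n1) = h" using IH EH2 h0 by simp
  have vS: "integral\<^sup>L ?S (U_s n1) = s" using IS s unfolding ES_def by simp
  have fin: "u - h = q - q ^ (n1 + 1)
             - (p^2 * q + (p + (1 - \<gamma>) * p^2 * q) * p * q^2 * (1 - (p * q) ^ (n1 - 1)) / (1 - p * q))"
    unfolding u_def h_def Ph_eq[OF pq g n1] by simp
  show ?thesis using vU vH vS us fin by simp
qed


end
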